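(* Let $\mathrm{End}(P_2)$ be the differential graded algebra of morphisms $P_2\to P_2$ of all homological degrees in $\mathrm{Kom}(2)$, with differential the graded commutator with the differential of $P_2$ and product composition, so that its homology is the algebra of homotopy classes of chain maps $P_2\to P_2$. With $\mathbb Z$ coefficients and $\alpha=0$, $$H(\mathrm{End}(P_2))\cong\mathbb Z[u]\oplus\mathbb Z[u]\cdot w\oplus\big(\mathbb Z[u]/(2u)\big)\cdot b$$ as a $\mathbb Z[u]$-module; the multiplication is commutative, with unit the identity, and determined by $w\cdot b=b^2=w^2=0$. Here the classes are represented by the following chain maps (a map of homological degree $-k$ has components $C_{n+k}\to C_n$): $b$ (degree $0$) has component $C_0\to C_0$ the identity of $\mathbb 1$ with a dot on the left strand and components $C_n\to C_n$ ($n\ge1$) equal to $x_{\mathrm{top}}$; $u$ (degree $-2$) has component $C_2\to C_0$ the saddle $e_1\to\mathbb 1$ and components $C_{n+2}\to C_n$ ($n\ge1$) the identity of $e_1$; $w$ (degree $-3$) has component $C_3\to C_0$ the saddle $e_1\to\mathbb 1$ with a dot and components $C_{n+3}\to C_n$ ($n\ge1$) equal to $x_{\mathrm{top}}$.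
   Context: $\mathrm{Kom}(2)$: bounded-below chain complexes over Bar-Natan's dotted cobordism category with 4 boundary points (2 on top, 2 on bottom), over $\mathbb Z[\alpha]$, relations: sphere $=0$, one-dotted sphere $=1$, two-dotted sphere $=0$, three-dotted sphere $=\alpha$, neck-cutting. $\mathbb 1$ = two vertical strands, $e_1$ = cap joining top points over cup joining bottom points, $s:\mathbb 1\to qe_1$ the saddle, $x_{\mathrm{top}},x_{\mathrm{bot}}:e_1\to e_1$ the identity with a dot on the top arc, resp. bottom arc. $P_2$ has chain groups $C_0=\mathbb 1$, $C_n=q^{2n-1}e_1$ ($n\ge1$, homological degree $n$), differentials $d_0=s$, $d_n=x_{\mathrm{top}}-x_{\mathrm{bot}}$ for odd $n$, $d_n=x_{\mathrm{top}}+x_{\mathrm{bot}}$ for even $n\ge2$. *)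

theory Defs
  imports Main "HOL-Library.Function_Algebras" "HOL-Computational_Algebra.Polynomial"
begin

text \<open>Objects: the two crossingless matchings with 2 top and 2 bottom points.
  One = two vertical strands (the identity tangle), E1 = cap over cup.\<close>
datatype obj = One | E1

text \<open>Basis dotted cobordisms (every cobordism reduces to a Z-combination of these by
  neck cutting and the sphere relations):
  D1 a b  : identity of One with a dot on the left strand iff a, on the right strand iff b;
  DE a b  : identity of E1 with a dot on the top arc iff a, on the bottom arc iff b;
  Sd a    : the saddle One -> E1, with one dot iff a;
  Sd' a   : the saddle E1 -> One, with one dot iff a.\<close>
datatype cob = D1 bool bool | DE bool bool | Sd bool | Sd' bool

fun src :: "cob \<Rightarrow> obj" where
  "src (D1 a b) = One" | "src (DE a b) = E1" | "src (Sd a) = One" | "src (Sd' a) = E1"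

fun tgt :: "cob \<Rightarrow> obj" where
  "tgt (D1 a b) = One" | "tgt (DE a b) = E1" | "tgt (Sd a) = E1" | "tgt (Sd' a) = One"

definition cobs :: "cob set" where
  "cobs = {D1 False False, D1 True False, D1 False True, D1 True True,
           DE False False, DE True False, DE False True, DE True True,
           Sd False, Sd True, Sd' False, Sd' True}"

type_synonym mor = "cob \<Rightarrow> int"

definition bas :: "cob \<Rightarrow> mor" where
  "bas c = (\<lambda>c'. if c' = c then 1 else 0)"

definition hom :: "obj \<Rightarrow> obj \<Rightarrow> mor set" where
  "hom X Y = {F. \<forall>c. F c \<noteq> 0 \<longrightarrow> src c = X \<and> tgt c = Y}"

definition nd :: "bool \<Rightarrow> nat" where "nd a = (if a then 1 else 0)"

text \<open>Composition of basis cobordisms, f after g (alpha = 0, so a doubly dotted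
  component vanishes; neck cutting gives saddle' o saddle = x_L + x_R and
  saddle o saddle' = x_top + x_bot).\<close>
fun bcomp :: "cob \<Rightarrow> cob \<Rightarrow> mor" where
  "bcomp (D1 a b) (D1 c d) = (if (a \<and> c) \<or> (b \<and> d) then 0 else bas (D1 (a \<or> c) (b \<or> d)))"
| "bcomp (DE a b) (DE c d) = (if (a \<and> c) \<or> (b \<and> d) then 0 else bas (DE (a \<or> c) (b \<or> d)))"
| "bcomp (Sd a) (D1 c d) = (if nd a + nd c + nd d \<ge> 2 then 0 else bas (Sd (a \<or> c \<or> d)))"
| "bcomp (DE c d) (Sd a) = (if nd a + nd c + nd d \<ge> 2 then 0 else bas (Sd (a \<or> c \<or> d)))"
| "bcomp (Sd' a) (DE c d) = (if nd a + nd c + nd d \<ge> 2 then 0 else bas (Sd' (a \<or> c \<or> d)))"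
| "bcomp (D1 c d) (Sd' a) = (if nd a + nd c + nd d \<ge> 2 then 0 else bas (Sd' (a \<or> c \<or> d)))"
| "bcomp (Sd' a) (Sd b) =
     (if nd a + nd b = 0 then bas (D1 True False) + bas (D1 False True)
      else if nd a + nd b = 1 then bas (D1 True True) else 0)"
| "bcomp (Sd a) (Sd' b) =
     (if nd a + nd b = 0 then bas (DE True False) + bas (DE False True)
      else if nd a + nd b = 1 then bas (DE True True) else 0)"
| "bcomp _ _ = 0"

definition mcomp :: "mor \<Rightarrow> mor \<Rightarrow> mor" where
  "mcomp F G = (\<lambda>c. \<Sum>f\<in>cobs. \<Sum>g\<in>cobs. F f * G g * bcomp f g c)"

section \<open>The complex P_2 (q-gradings suppressed)\<close>

definition Cobj :: "nat \<Rightarrow> obj" where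
  "Cobj n = (if n = 0 then One else E1)"

text \<open>dP n : C_n -> C_(n+1)\<close>
definition dP :: "nat \<Rightarrow> mor" where
  "dP n = (if n = 0 then bas (Sd False)
           else if odd n then bas (DE True False) - bas (DE False True)
           else bas (DE True False) + bas (DE False True))"

text \<open>An element F of End(P_2): F d m is the component C_m -> C_(m+d) of its
  homogeneous part of homological degree d (a map of degree -k in the paper's
  convention has d = -k).  End(P_2) is the direct sum over d, hence finite support in d.\<close>
type_synonym endo = "int \<Rightarrow> nat \<Rightarrow> mor"

definition EndP :: "endo set" where
  "EndP = {F. finite {d. F d \<noteq> 0} \<and>
      (\<forall>d m. if int m + d \<ge> 0 then F d m \<in> hom (Cobj m) (Cobj (nat (int m + d)))
             else F d m = 0)}"

definition sgn_int :: "int \<Rightarrow> int" where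
  "sgn_int e = (if even e then 1 else -1)"

definition dEnd :: "endo \<Rightarrow> endo" where
  "dEnd F = (\<lambda>d m.
     (if int m + d - 1 \<ge> 0 then mcomp (dP (nat (int m + d - 1))) (F (d - 1) m) else 0)
     - (\<lambda>c. sgn_int (d - 1) * (if int m + d \<ge> 0 then mcomp (F (d - 1) (Suc m)) (dP m) else 0) c))"

definition ecomp :: "endo \<Rightarrow> endo \<Rightarrow> endo" where
  "ecomp F G = (\<lambda>d m. \<Sum>e\<in>{e. G e \<noteq> 0}.
      if int m + e \<ge> 0 then mcomp (F (d - e) (nat (int m + e))) (G e m) else 0)"

definition IdP :: endo where
  "IdP = (\<lambda>d m. if d = 0 then (if m = 0 then bas (D1 False False) else bas (DE False False)) else 0)"

definition smul :: "int \<Rightarrow> endo \<Rightarrow> endo" where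
  "smul c F = (\<lambda>d m x. c * F d m x)"

primrec epow :: "endo \<Rightarrow> nat \<Rightarrow> endo" where
  "epow F 0 = IdP"
| "epow F (Suc n) = ecomp F (epow F n)"

definition pev :: "int poly \<Rightarrow> endo \<Rightarrow> endo" where
  "pev p X = (\<Sum>i\<le>degree p. smul (coeff p i) (epow X i))"

definition Cyc :: "endo set" where
  "Cyc = {F \<in> EndP. dEnd F = 0}"

definition Bd :: "endo set" where
  "Bd = dEnd ` EndP"

definition bP :: endo where
  "bP = (\<lambda>d m. if d = 0 then (if m = 0 then bas (D1 True False) else bas (DE True False)) else 0)"

definition uP :: endo where
  "uP = (\<lambda>d m. if d = -2 \<and> m = 2 then bas (Sd' False)
               else if d = -2 \<and> m \<ge> 3 then bas (DE False False) else 0)"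

definition wP :: endo where
  "wP = (\<lambda>d m. if d = -3 \<and> m = 3 then bas (Sd' True)
               else if d = -3 \<and> m \<ge> 4 then bas (DE True False) else 0)"

definition Phi :: "int poly \<Rightarrow> int poly \<Rightarrow> int poly \<Rightarrow> endo" where
  "Phi p q r = pev p uP + ecomp (pev q uP) wP + ecomp (pev r uP) bP"

end

theory Submission imports Defs begin

lemma cobs_UNIV: "cobs = UNIV"
proof -
  have "x \<in> cobs" for x by (cases x) (auto simp: cobs_def)
  then show ?thesis by auto
qed

lemma mc_D1_FF: "mcomp F G (D1 False False) = F (D1 False False) * G (D1 False False)"
  by (simp add: mcomp_def cobs_def bas_def nd_def)
lemma mc_D1_FT: "mcomp F G (D1 False True) = F (D1 False False) * G (D1 False True) + F (D1 False True) * G (D1 False False) + F (Sd' False) * G (Sd False)"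
  by (simp add: mcomp_def cobs_def bas_def nd_def)
lemma mc_D1_TF: "mcomp F G (D1 True False) = F (D1 False False) * G (D1 True False) + F (D1 True False) * G (D1 False False) + F (Sd' False) * G (Sd False)"
  by (simp add: mcomp_def cobs_def bas_def nd_def)
lemma mc_D1_TT: "mcomp F G (D1 True True) = F (D1 False False) * G (D1 True True) + F (D1 False True) * G (D1 True False) + F (D1 True False) * G (D1 False True) + F (D1 True True) * G (D1 False False) + F (Sd' False) * G (Sd True) + F (Sd' True) * G (Sd False)"
  by (simp add: mcomp_def cobs_def bas_def nd_def)
lemma mc_DE_FF: "mcomp F G (DE False False) = F (DE False False) * G (DE False False)"
  by (simp add: mcomp_def cobs_def bas_def nd_def)
lemma mc_DE_FT: "mcomp F G (DE False True) = F (DE False False) * G (DE False True) + F (DE False True) * G (DE False False) + F (Sd False) * G (Sd' False)"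
  by (simp add: mcomp_def cobs_def bas_def nd_def)
lemma mc_DE_TF: "mcomp F G (DE True False) = F (DE False False) * G (DE True False) + F (DE True False) * G (DE False False) + F (Sd False) * G (Sd' False)"
  by (simp add: mcomp_def cobs_def bas_def nd_def)
lemma mc_DE_TT: "mcomp F G (DE True True) = F (DE False False) * G (DE True True) + F (DE False True) * G (DE True False) + F (DE True False) * G (DE False True) + F (DE True True) * G (DE False False) + F (Sd False) * G (Sd' True) + F (Sd True) * G (Sd' False)"
  by (simp add: mcomp_def cobs_def bas_def nd_def)
lemma mc_Sd_F: "mcomp F G (Sd False) = F (DE False False) * G (Sd False) + F (Sd False) * G (D1 False False)"
  by (simp add: mcomp_def cobs_def bas_def nd_def)
lemma mc_Sd_T: "mcomp F G (Sd True) = F (DE False False) * G (Sd True) + F (DE False True) * G (Sd False) + F (DE True False) * G (Sd False) + F (Sd False) * G (D1 False True) + F (Sd False) * G (D1 True False) + F (Sd True) * G (D1 False False)"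
  by (simp add: mcomp_def cobs_def bas_def nd_def)
lemma mc_Sdp_F: "mcomp F G (Sd' False) = F (D1 False False) * G (Sd' False) + F (Sd' False) * G (DE False False)"
  by (simp add: mcomp_def cobs_def bas_def nd_def)
lemma mc_Sdp_T: "mcomp F G (Sd' True) = F (D1 False False) * G (Sd' True) + F (D1 False True) * G (Sd' False) + F (D1 True False) * G (Sd' False) + F (Sd' False) * G (DE False True) + F (Sd' False) * G (DE True False) + F (Sd' True) * G (DE False False)"
  by (simp add: mcomp_def cobs_def bas_def nd_def)
lemmas mc_simps = mc_D1_FF mc_D1_FT mc_D1_TF mc_D1_TT mc_DE_FF mc_DE_FT mc_DE_TF mc_DE_TT mc_Sd_F mc_Sd_T mc_Sdp_F mc_Sdp_T

lemma mor_eqI: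
  assumes "F (D1 False False) = G (D1 False False)" "F (D1 False True) = G (D1 False True)"
    "F (D1 True False) = G (D1 True False)" "F (D1 True True) = G (D1 True True)"
    "F (DE False False) = G (DE False False)" "F (DE False True) = G (DE False True)"
    "F (DE True False) = G (DE True False)" "F (DE True True) = G (DE True True)"
    "F (Sd False) = G (Sd False)" "F (Sd True) = G (Sd True)"
    "F (Sd' False) = G (Sd' False)" "F (Sd' True) = G (Sd' True)"
  shows "F = G"
proof
  fix x show "F x = G x"
  proof (cases x)
    case (D1 a b) then show ?thesis using assms by (cases a; cases b) auto
  next
    case (DE a b) then show ?thesis using assms by (cases a; cases b) auto
  next
    case (Sd a) then show ?thesis using assms by (cases a) auto
  next
    case (Sd' a) then show ?thesis using assms by (cases a) auto
  qed
qed

lemma mcomp_assoc: "mcomp (mcomp F G) H = mcomp F (mcomp G H)"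
  by (rule mor_eqI) (simp_all add: mc_simps algebra_simps)

lemma mcomp_add1: "mcomp (F + G) H = mcomp F H + mcomp G H"
  by (rule mor_eqI) (simp_all add: mc_simps algebra_simps)
lemma mcomp_add2: "mcomp F (G + H) = mcomp F G + mcomp F H"
  by (rule mor_eqI) (simp_all add: mc_simps algebra_simps)
lemma mcomp_diff1: "mcomp (F - G) H = mcomp F H - mcomp G H"
  by (rule mor_eqI) (simp_all add: mc_simps algebra_simps)
lemma mcomp_diff2: "mcomp F (G - H) = mcomp F G - mcomp F H"
  by (rule mor_eqI) (simp_all add: mc_simps algebra_simps)
lemma mcomp_neg1: "mcomp (- F) H = - mcomp F H"
  by (rule mor_eqI) (simp_all add: mc_simps algebra_simps)
lemma mcomp_neg2: "mcomp F (- H) = - mcomp F H"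
  by (rule mor_eqI) (simp_all add: mc_simps algebra_simps)
lemma mcomp_zero1[simp]: "mcomp 0 H = 0"
  by (rule mor_eqI) (simp_all add: mc_simps algebra_simps)
lemma mcomp_zero2[simp]: "mcomp F 0 = 0"
  by (rule mor_eqI) (simp_all add: mc_simps algebra_simps)
lemma mcomp_zero1'[simp]: "mcomp (\<lambda>_. 0) H = 0"
  by (rule mor_eqI) (simp_all add: mc_simps algebra_simps)
lemma mcomp_zero2'[simp]: "mcomp F (\<lambda>_. 0) = 0"
  by (rule mor_eqI) (simp_all add: mc_simps algebra_simps)
lemma mcomp_scal1: "mcomp (\<lambda>c. k * F c) H = (\<lambda>c. k * mcomp F H c)"
  by (rule mor_eqI) (simp_all add: mc_simps algebra_simps)
lemma mcomp_scal2: "mcomp F (\<lambda>c. k * H c) = (\<lambda>c. k * mcomp F H c)"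
  by (rule mor_eqI) (simp_all add: mc_simps algebra_simps)

lemma homD: "F \<in> hom X Y \<Longrightarrow> src c \<noteq> X \<or> tgt c \<noteq> Y \<Longrightarrow> F c = 0"
  unfolding hom_def by auto

lemma cob_all: "(\<forall>c. P c) \<longleftrightarrow> P (D1 False False) \<and> P (D1 False True) \<and> P (D1 True False) \<and> P (D1 True True)
  \<and> P (DE False False) \<and> P (DE False True) \<and> P (DE True False) \<and> P (DE True True)
  \<and> P (Sd False) \<and> P (Sd True) \<and> P (Sd' False) \<and> P (Sd' True)"
proof
  assume H: "P (D1 False False) \<and> P (D1 False True) \<and> P (D1 True False) \<and> P (D1 True True)
  \<and> P (DE False False) \<and> P (DE False True) \<and> P (DE True False) \<and> P (DE True True)
  \<and> P (Sd False) \<and> P (Sd True) \<and> P (Sd' False) \<and> P (Sd' True)"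
  show "\<forall>c. P c"
  proof
    fix c show "P c"
    proof (cases c)
      case (D1 a b) then show ?thesis using H by (cases a; cases b) auto
    next
      case (DE a b) then show ?thesis using H by (cases a; cases b) auto
    next
      case (Sd a) then show ?thesis using H by (cases a) auto
    next
      case (Sd' a) then show ?thesis using H by (cases a) auto
    qed
  qed
qed auto

lemma hom_mcomp:
  assumes A: "A \<in> hom Y Z" and B: "B \<in> hom X Y"
  shows "mcomp A B \<in> hom X Z"
proof -
  note a = homD[OF A] and b = homD[OF B]
  have "\<forall>c. src c \<noteq> X \<or> tgt c \<noteq> Z \<longrightarrow> mcomp A B c = 0"
    unfolding cob_all by (cases X; cases Y; cases Z) (simp_all add: mc_simps a b)
  then show ?thesis unfolding hom_def by blast
qed


lemma sum_apply_fun: "(\<Sum>i\<in>A. f i) x = (\<Sum>i\<in>A. f i x)"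
  by (induct A rule: infinite_finite_induct) auto

lemma hom_zero[simp]: "0 \<in> hom X Y" by (simp add: hom_def)
lemma hom_zero'[simp]: "(\<lambda>_. 0) \<in> hom X Y" by (simp add: hom_def)
lemma zero_mor: "(\<lambda>_. 0::int) = 0" by auto
lemma hom_add: "A \<in> hom X Y \<Longrightarrow> B \<in> hom X Y \<Longrightarrow> A + B \<in> hom X Y"
proof -
  assume a: "A \<in> hom X Y" and b: "B \<in> hom X Y"
  { fix c assume "(A + B) c \<noteq> 0" then have "A c \<noteq> 0 \<or> B c \<noteq> 0" by auto
    then have "src c = X \<and> tgt c = Y" using a b unfolding hom_def by blast }
  then show ?thesis unfolding hom_def by blast
qed
lemma hom_diff: "A \<in> hom X Y \<Longrightarrow> B \<in> hom X Y \<Longrightarrow> A - B \<in> hom X Y"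
proof -
  assume a: "A \<in> hom X Y" and b: "B \<in> hom X Y"
  { fix c assume "(A - B) c \<noteq> 0" then have "A c \<noteq> 0 \<or> B c \<noteq> 0" by auto
    then have "src c = X \<and> tgt c = Y" using a b unfolding hom_def by blast }
  then show ?thesis unfolding hom_def by blast
qed
lemma hom_neg: "A \<in> hom X Y \<Longrightarrow> - A \<in> hom X Y"
  by (auto simp: hom_def)
lemma hom_scal: "A \<in> hom X Y \<Longrightarrow> (\<lambda>c. k * A c) \<in> hom X Y"
  by (auto simp: hom_def)
lemma hom_sum: "(\<And>i. i \<in> I \<Longrightarrow> A i \<in> hom X Y) \<Longrightarrow> (\<Sum>i\<in>I. A i) \<in> hom X Y"
  by (induct I rule: infinite_finite_induct) (auto intro: hom_add)

lemma sgn_fun: "(\<lambda>c. sgn_int e * (F::mor) c) = (if even e then F else - F)"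
  by (auto simp: sgn_int_def)

definition rE :: "int \<Rightarrow> int \<Rightarrow> int \<Rightarrow> int \<Rightarrow> mor" where
  "rE a b c e = (\<lambda>x. case x of DE p q \<Rightarrow> (if p then (if q then e else b) else (if q then c else a)) | _ \<Rightarrow> 0)"
definition rT :: "int \<Rightarrow> int \<Rightarrow> mor" where
  "rT a b = (\<lambda>x. case x of Sd' p \<Rightarrow> (if p then b else a) | _ \<Rightarrow> 0)"

lemma rE_simps[simp]: "rE a b c e (DE False False) = a" "rE a b c e (DE True False) = b"
  "rE a b c e (DE False True) = c" "rE a b c e (DE True True) = e"
  "rE a b c e (D1 p q) = 0" "rE a b c e (Sd p) = 0" "rE a b c e (Sd' p) = 0"
  by (simp_all add: rE_def)
lemma rT_simps[simp]: "rT a b (Sd' False) = a" "rT a b (Sd' True) = b"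
  "rT a b (D1 p q) = 0" "rT a b (Sd p) = 0" "rT a b (DE p q) = 0"
  by (simp_all add: rT_def)

lemma Cobj_simps[simp]: "Cobj 0 = One" "Cobj (Suc n) = E1" "n > 0 \<Longrightarrow> Cobj n = E1"
  by (simp_all add: Cobj_def)

lemma dP_coord: "dP n c = (if n = 0 then (if c = Sd False then 1 else 0) else
   (case c of DE p q \<Rightarrow> (if p \<and> \<not> q then 1 else if \<not> p \<and> q then (if odd n then -1 else 1) else 0) | _ \<Rightarrow> 0))"
  by (cases c) (auto simp: dP_def bas_def)

lemma dP0_simps[simp]: "dP 0 (Sd False) = 1" "dP 0 (Sd True) = 0" "dP 0 (D1 p q) = 0" "dP 0 (DE p q) = 0" "dP 0 (Sd' p) = 0"
  by (simp_all add: dP_coord)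
lemma dPS_simps[simp]: "dP (Suc n) (DE True False) = 1" "dP (Suc n) (DE False True) = (if even n then -1 else 1)"
  "dP (Suc n) (DE False False) = 0" "dP (Suc n) (DE True True) = 0"
  "dP (Suc n) (D1 p q) = 0" "dP (Suc n) (Sd p) = 0" "dP (Suc n) (Sd' p) = 0"
  by (simp_all add: dP_coord)

lemma dP_hom: "dP n \<in> hom (Cobj n) (Cobj (Suc n))"
proof (cases n)
  case 0 then show ?thesis by (simp add: hom_def dP_def bas_def)
next
  case (Suc k)
  have "\<forall>c. src c \<noteq> E1 \<or> tgt c \<noteq> E1 \<longrightarrow> dP (Suc k) c = 0" unfolding cob_all by simp
  then show ?thesis using Suc unfolding hom_def by auto
qed

lemma dP_dd: "mcomp (dP (Suc n)) (dP n) = 0"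
  by (cases n) (rule mor_eqI; simp add: mc_simps)+


section \<open>Solving the lifting problem\<close>

definition solve :: "nat \<Rightarrow> int \<Rightarrow> mor \<Rightarrow> mor" where
  "solve m t X = (if t < 0 then 0 else if m = 0 then
      (if t = 0 then rT (X (D1 True False)) (X (D1 True True)) else rE (X (Sd False)) (X (Sd True)) 0 0)
    else (if t = 0 then rT (X (Sd' True) div 2) 0 else rE (X (DE True False)) 0 (X (DE True True)) 0))"

definition obst :: "nat \<Rightarrow> mor \<Rightarrow> bool" where
  "obst m X = (if m = 0 then X (D1 False False) = 0 \<and> X (D1 True False) = X (D1 False True)
     else if m = 1 then True else if even m then X (Sd' False) = 0 \<and> even (X (Sd' True))
     else X (Sd' True) = 0)"

lemma solve_zero[simp]: "solve m t 0 = 0"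
  by (rule mor_eqI) (simp_all add: solve_def)

lemma solve_zero'[simp]: "solve m t (\<lambda>_. 0) = 0"
  by (rule mor_eqI) (simp_all add: solve_def)

lemma solve_neg[simp]: "t < 0 \<Longrightarrow> solve m t X = 0"
  by (simp add: solve_def)

lemma solve_hom:
  assumes "t \<ge> 0"
  shows "solve m t X \<in> hom (Cobj (Suc m)) (Cobj (nat t))"
proof -
  have "\<forall>c. src c \<noteq> E1 \<or> tgt c \<noteq> Cobj (nat t) \<longrightarrow> solve m t X c = 0"
    unfolding cob_all using assms by (simp add: solve_def Cobj_def)
  then show ?thesis unfolding hom_def by auto
qed

lemma solve_0_pos:
  assumes "X \<in> hom One E1" "t > 0"
  shows "mcomp (solve 0 t X) (dP 0) = X"
  using assms by (intro mor_eqI) (simp_all add: solve_def mc_simps homD[OF assms(1)])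

lemma solve_0_0:
  assumes "X \<in> hom One One" "obst 0 X"
  shows "mcomp (solve 0 0 X) (dP 0) = X"
  using assms by (intro mor_eqI) (simp_all add: solve_def obst_def mc_simps homD[OF assms(1)])

lemma solve_pos:
  assumes "X \<in> hom E1 E1" "t > 0" "m > 0" "mcomp X (dP (m - 1)) = 0"
  shows "mcomp (solve m t X) (dP m) = X"
proof -
  note h = homD[OF assms(1)]
  obtain k where m: "m = Suc k" using assms(3) by (cases m) auto
  show ?thesis
  proof (cases k)
    case 0
    have e: "mcomp X (dP 0) (Sd False) = 0" "mcomp X (dP 0) (Sd True) = 0"
      using assms(4) m 0 by simp_all
    then show ?thesis using assms m 0 by (intro mor_eqI) (simp_all add: solve_def mc_simps h)
  next
    case (Suc j)
    have e: "mcomp X (dP (Suc j)) (DE True False) = 0" "mcomp X (dP (Suc j)) (DE True True) = 0"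
      using assms(4) m Suc by simp_all
    then show ?thesis using assms m Suc by (intro mor_eqI) (auto simp add: solve_def mc_simps h)
  qed
qed

lemma solve_t0:
  assumes "X \<in> hom E1 One" "m > 0" "mcomp X (dP (m - 1)) = 0" "obst m X"
  shows "mcomp (solve m 0 X) (dP m) = X"
proof -
  note h = homD[OF assms(1)]
  obtain k where m: "m = Suc k" using assms(2) by (cases m) auto
  show ?thesis
  proof (cases k)
    case 0
    have e: "mcomp X (dP 0) (D1 True False) = 0" "mcomp X (dP 0) (D1 True True) = 0"
      using assms(3) m 0 by simp_all
    then show ?thesis using assms m 0 by (intro mor_eqI) (simp_all add: solve_def mc_simps h)
  next
    case (Suc j)
    have e: "mcomp X (dP (Suc j)) (Sd' True) = 0"
      using assms(3) m Suc by simp_all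
    then show ?thesis using assms m Suc by (intro mor_eqI) (auto simp add: solve_def mc_simps h obst_def split: if_splits)
  qed
qed


section \<open>The recursive homotopy in a single degree\<close>

definition typed :: "int \<Rightarrow> (nat \<Rightarrow> mor) \<Rightarrow> bool" where
  "typed d g \<longleftrightarrow> (\<forall>m. if int m + d \<ge> 0 then g m \<in> hom (Cobj m) (Cobj (nat (int m + d))) else g m = 0)"

definition Dsl :: "int \<Rightarrow> (nat \<Rightarrow> mor) \<Rightarrow> nat \<Rightarrow> mor" where
  "Dsl d h m = (if int m + d - 1 \<ge> 0 then mcomp (dP (nat (int m + d - 1))) (h m) else 0)
     - (if even (d - 1) then (if int m + d \<ge> 0 then mcomp (h (Suc m)) (dP m) else 0)
        else - (if int m + d \<ge> 0 then mcomp (h (Suc m)) (dP m) else 0))"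

lemma dEnd_Dsl: "dEnd F d m = Dsl d (F (d - 1)) m"
  by (simp add: dEnd_def Dsl_def sgn_fun)

primrec Hrec :: "int \<Rightarrow> (nat \<Rightarrow> mor) \<Rightarrow> nat \<Rightarrow> mor" where
  "Hrec d g 0 = 0"
| "Hrec d g (Suc m) = (if even d
     then solve m (int m + d) (g m - (if int m + d - 1 \<ge> 0 then mcomp (dP (nat (int m + d - 1))) (Hrec d g m) else 0))
     else - solve m (int m + d) (g m - (if int m + d - 1 \<ge> 0 then mcomp (dP (nat (int m + d - 1))) (Hrec d g m) else 0)))"

definition Xr :: "int \<Rightarrow> (nat \<Rightarrow> mor) \<Rightarrow> nat \<Rightarrow> mor" where
  "Xr d g m = g m - (if int m + d - 1 \<ge> 0 then mcomp (dP (nat (int m + d - 1))) (Hrec d g m) else 0)"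

lemma Hrec_Suc': "Hrec d g (Suc m) = (if even d then solve m (int m + d) (Xr d g m) else - solve m (int m + d) (Xr d g m))"
  by (simp add: Xr_def)

declare Hrec.simps(2)[simp del]

lemma typedD1: "typed d g \<Longrightarrow> int m + d \<ge> 0 \<Longrightarrow> g m \<in> hom (Cobj m) (Cobj (nat (int m + d)))"
  unfolding typed_def by (metis)
lemma typedD2: "typed d g \<Longrightarrow> int m + d < 0 \<Longrightarrow> g m = 0"
  unfolding typed_def by (metis not_le)

lemma Xr_typed:
  assumes tg: "typed d g" and th: "typed (d - 1) (Hrec d g)"
  shows "int m + d \<ge> 0 \<Longrightarrow> Xr d g m \<in> hom (Cobj m) (Cobj (nat (int m + d)))"
    and "int m + d < 0 \<Longrightarrow> Xr d g m = 0"
proof -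
  assume a: "int m + d \<ge> 0"
  have "(if int m + d - 1 \<ge> 0 then mcomp (dP (nat (int m + d - 1))) (Hrec d g m) else 0) \<in> hom (Cobj m) (Cobj (nat (int m + d)))"
  proof (cases "int m + d - 1 \<ge> 0")
    case True
    have h1: "Hrec d g m \<in> hom (Cobj m) (Cobj (nat (int m + d - 1)))"
      using typedD1[OF th, of m] True by (simp add: algebra_simps)
    have e: "Suc (nat (int m + d - 1)) = nat (int m + d)" using True by simp
    show ?thesis using True hom_mcomp[OF dP_hom[of "nat (int m + d - 1)", unfolded e] h1] by simp
  qed simp
  then show "Xr d g m \<in> hom (Cobj m) (Cobj (nat (int m + d)))"
    unfolding Xr_def by (rule hom_diff[OF typedD1[OF tg a]])
next
  assume a: "int m + d < 0"
  then show "Xr d g m = 0" using typedD2[OF tg a] by (simp add: Xr_def)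
qed

lemma Hrec_typed:
  assumes tg: "typed d g"
  shows "typed (d - 1) (Hrec d g)"
  unfolding typed_def
proof
  fix m show "if int m + (d - 1) \<ge> 0 then Hrec d g m \<in> hom (Cobj m) (Cobj (nat (int m + (d - 1)))) else Hrec d g m = 0"
  proof (induct m)
    case 0 then show ?case by simp
  next
    case (Suc m)
    have IH: "int m + d - 1 \<ge> 0 \<Longrightarrow> Hrec d g m \<in> hom (Cobj m) (Cobj (nat (int m + d - 1)))"
      using Suc by (simp add: algebra_simps split: if_splits)
    show ?case
    proof (cases "int m + d \<ge> 0")
      case True
      have "(if int m + d - 1 \<ge> 0 then mcomp (dP (nat (int m + d - 1))) (Hrec d g m) else 0) \<in> hom (Cobj m) (Cobj (nat (int m + d)))"
      proof (cases "int m + d - 1 \<ge> 0")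
        case True
        have e: "Suc (nat (int m + d - 1)) = nat (int m + d)" using True by simp
        show ?thesis using True hom_mcomp[OF dP_hom[of "nat (int m + d - 1)", unfolded e] IH[OF True]] by simp
      qed simp
      then have X: "Xr d g m \<in> hom (Cobj m) (Cobj (nat (int m + d)))"
        unfolding Xr_def using typedD1[OF tg True] by (rule hom_diff[rotated])
      have S: "solve m (int m + d) (Xr d g m) \<in> hom (Cobj (Suc m)) (Cobj (nat (int m + d)))"
        using solve_hom[OF True] .
      have e2: "int (Suc m) + (d - 1) = int m + d" by simp
      show ?thesis unfolding e2 Hrec_Suc' using True S hom_neg[OF S] by simp
    next
      case False
      have e2: "int (Suc m) + (d - 1) = int m + d" by simp
      show ?thesis unfolding e2 Hrec_Suc' using False by simp
    qed
  qed
qed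

lemma Hrec_zero: "Hrec d (\<lambda>_. 0) m = 0"
  by (induct m) (simp_all add: Hrec_Suc' Xr_def zero_mor)


lemma Xr_Suc_pos: "int m + d \<ge> 0 \<Longrightarrow> Xr d g (Suc m) = g (Suc m) - mcomp (dP (nat (int m + d))) (Hrec d g (Suc m))"
  by (simp add: Xr_def add.commute add.left_commute)
lemma Xr_Suc_neg: "int m + d < 0 \<Longrightarrow> Xr d g (Suc m) = g (Suc m)"
  by (simp add: Xr_def add.commute add.left_commute)

lemma Dsl_cyc: "Dsl (d + 1) g m = (if int m + d \<ge> 0 then mcomp (dP (nat (int m + d))) (g m) else 0)
     - (if even d then (if int m + d + 1 \<ge> 0 then mcomp (g (Suc m)) (dP m) else 0)
        else - (if int m + d + 1 \<ge> 0 then mcomp (g (Suc m)) (dP m) else 0))"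
  by (simp add: Dsl_def add.assoc)

lemma dP_dP_comp: "mcomp (dP (Suc k)) (mcomp (dP k) H) = 0"
  by (simp add: mcomp_assoc[symmetric] dP_dd)

lemma K_lemma:
  assumes tg: "typed d g" and cyc: "\<forall>m. Dsl (d + 1) g m = 0"
    and S: "mcomp (solve m (int m + d) (Xr d g m)) (dP m) = Xr d g m"
  shows "mcomp (Xr d g (Suc m)) (dP m) = 0"
proof -
  have HS: "mcomp (Hrec d g (Suc m)) (dP m) = (if even d then Xr d g m else - Xr d g m)"
    by (simp add: Hrec_Suc' mcomp_neg1 S)
  have C: "Dsl (d + 1) g m = 0" using cyc by blast
  define A where "A = mcomp (g (Suc m)) (dP m)"
  show ?thesis
  proof (cases "int m + d \<ge> 0")
    case True
    define n where "n = nat (int m + d)"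
    have dX: "mcomp (dP n) (Xr d g m) = mcomp (dP n) (g m)"
    proof (cases "int m + d - 1 \<ge> 0")
      case True
      have "n = Suc (nat (int m + d - 1))" using True by (simp add: n_def)
      then show ?thesis using True by (simp add: Xr_def mcomp_diff2 dP_dP_comp)
    qed (simp add: Xr_def)
    have cyc': "mcomp (dP n) (g m) = (if even d then A else - A)"
      using C True unfolding Dsl_cyc A_def n_def by (simp split: if_splits)
    have "mcomp (Xr d g (Suc m)) (dP m) = A - mcomp (dP n) (mcomp (Hrec d g (Suc m)) (dP m))"
      using True by (simp add: Xr_Suc_pos A_def n_def mcomp_diff1 mcomp_assoc)
    also have "\<dots> = 0" using HS dX cyc' by (simp add: mcomp_neg2)
    finally show ?thesis .
  next
    case False
    show ?thesis
    proof (cases "int m + d + 1 \<ge> 0")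
      case True
      have "A = 0" using C True False unfolding Dsl_cyc A_def by (simp split: if_splits)
      then show ?thesis using False by (simp add: Xr_Suc_neg A_def)
    next
      case F2: False
      have "g (Suc m) = 0" using typedD2[OF tg, of "Suc m"] F2 by simp
      then show ?thesis using False by (simp add: Xr_Suc_neg)
    qed
  qed
qed

lemma S_lemma:
  assumes tg: "typed d g" and cyc: "\<forall>m. Dsl (d + 1) g m = 0"
    and ob: "\<forall>m. int m + d = 0 \<longrightarrow> obst m (g m)"
  shows "mcomp (solve m (int m + d) (Xr d g m)) (dP m) = Xr d g m"
proof (induct m)
  case 0
  have X0: "Xr d g 0 = g 0" by (simp add: Xr_def)
  show ?case
  proof (cases "d > 0")
    case True
    have "g 0 \<in> hom One E1" using typedD1[OF tg, of 0] True by (simp add: Cobj_def)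
    then show ?thesis using True X0 solve_0_pos by simp
  next
    case False
    show ?thesis
    proof (cases "d = 0")
      case True
      have "g 0 \<in> hom One One" using typedD1[OF tg, of 0] True by simp
      moreover have "obst 0 (g 0)" using ob True by auto
      ultimately show ?thesis using True X0 solve_0_0 by simp
    next
      case F2: False
      then have "g 0 = 0" using False typedD2[OF tg, of 0] by simp
      then show ?thesis using X0 by simp
    qed
  qed
next
  case (Suc m)
  have K: "mcomp (Xr d g (Suc m)) (dP m) = 0" using K_lemma[OF tg cyc Suc] .
  note th = Hrec_typed[OF tg]
  show ?case
  proof (cases "int (Suc m) + d > 0")
    case True
    have "Xr d g (Suc m) \<in> hom E1 E1"
      using Xr_typed(1)[OF tg th, of "Suc m"] True by (simp add: Cobj_def)
    then show ?thesis using solve_pos[of "Xr d g (Suc m)" "int (Suc m) + d" "Suc m"] True K by simp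
  next
    case False
    show ?thesis
    proof (cases "int (Suc m) + d = 0")
      case True
      have "Xr d g (Suc m) \<in> hom E1 One"
        using Xr_typed(1)[OF tg th, of "Suc m"] True by simp
      moreover have "Xr d g (Suc m) = g (Suc m)" using True by (simp add: Xr_Suc_neg)
      moreover have "obst (Suc m) (g (Suc m))" using ob True by blast
      ultimately show ?thesis using solve_t0[of "Xr d g (Suc m)" "Suc m"] True K by simp
    next
      case F2: False
      have "Xr d g (Suc m) = 0" using Xr_typed(2)[OF tg th, of "Suc m"] False F2 by simp
      then show ?thesis by simp
    qed
  qed
qed

lemma Dsl_Hrec:
  assumes tg: "typed d g" and cyc: "\<forall>m. Dsl (d + 1) g m = 0"
    and ob: "\<forall>m. int m + d = 0 \<longrightarrow> obst m (g m)"
  shows "Dsl d (Hrec d g) m = g m"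
proof (cases "int m + d \<ge> 0")
  case True
  have HS: "mcomp (Hrec d g (Suc m)) (dP m) = (if even d then Xr d g m else - Xr d g m)"
    by (simp add: Hrec_Suc' mcomp_neg1 S_lemma[OF tg cyc ob])
  show ?thesis using True unfolding Dsl_def HS by (simp add: Xr_def)
next
  case False
  then show ?thesis using typedD2[OF tg, of m] by (simp add: Dsl_def)
qed


lemma EndP_iff: "F \<in> EndP \<longleftrightarrow> finite {d. F d \<noteq> 0} \<and> (\<forall>d. typed d (F d))"
  by (simp add: EndP_def typed_def)

theorem core:
  assumes FE: "F \<in> EndP" and cy: "dEnd F = 0" and ob: "\<forall>d m. int m + d = 0 \<longrightarrow> obst m (F d m)"
  shows "F \<in> Bd"
proof -
  define H where "H = (\<lambda>e. Hrec (e + 1) (F (e + 1)))"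
  have fin: "finite {d. F d \<noteq> 0}" and ty: "\<And>d. typed d (F d)" using FE by (auto simp: EndP_iff)
  have "{e. H e \<noteq> 0} \<subseteq> (\<lambda>d. d - 1) ` {d. F d \<noteq> 0}"
  proof
    fix e assume "e \<in> {e. H e \<noteq> 0}"
    then have "F (e + 1) \<noteq> 0"
    proof (rule contrapos_pp)
      assume "\<not> F (e + 1) \<noteq> 0"
      then have "F (e + 1) = (\<lambda>_. 0)" by auto
      then show "e \<notin> {e. H e \<noteq> 0}" by (auto simp: H_def Hrec_zero)
    qed
    then show "e \<in> (\<lambda>d. d - 1) ` {d. F d \<noteq> 0}" by (intro image_eqI[of _ _ "e + 1"]) auto
  qed
  then have finH: "finite {e. H e \<noteq> 0}" using fin by (rule finite_subset[OF _ finite_imageI])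
  have tyH: "typed e (H e)" for e using Hrec_typed[OF ty[of "e + 1"]] by (simp add: H_def)
  have HE: "H \<in> EndP" using finH tyH by (simp add: EndP_iff)
  have cyc: "\<forall>m. Dsl (d + 1) (F d) m = 0" for d
    using cy by (metis dEnd_Dsl add_diff_cancel_right' zero_fun_apply)
  have "dEnd H = F"
  proof (rule ext, rule ext)
    fix d m
    have "dEnd H d m = Dsl d (Hrec d (F d)) m" by (simp add: dEnd_Dsl H_def)
    also have "\<dots> = F d m" using Dsl_Hrec[OF ty cyc] ob by blast
    finally show "dEnd H d m = F d m" .
  qed
  then show ?thesis unfolding Bd_def using HE by blast
qed


section \<open>The families of generators\<close>

definition Fam :: "nat \<Rightarrow> bool \<Rightarrow> nat \<Rightarrow> mor" where
  "Fam \<delta> t m = (if m = \<delta> then (if \<delta> = 0 then bas (D1 t False) else bas (Sd' t))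
     else if m > \<delta> then bas (DE t False) else 0)"

definition FamE :: "nat \<Rightarrow> bool \<Rightarrow> endo" where
  "FamE \<delta> t = (\<lambda>d m. if d = - int \<delta> then Fam \<delta> t m else 0)"

lemma Fam_c: "Fam \<delta> t m c = (if m = \<delta> \<and> \<delta> = 0 then (if c = D1 t False then 1 else 0)
   else if m = \<delta> then (if c = Sd' t then 1 else 0) else if m > \<delta> then (if c = DE t False then 1 else 0) else 0)"
  by (simp add: Fam_def bas_def)

lemma finite_cob: "finite (UNIV :: cob set)"
  by (simp add: cobs_UNIV[symmetric] cobs_def)

lemma mcomp_bas: "mcomp (bas f) (bas g) = bcomp f g"
proof
  fix c
  have "mcomp (bas f) (bas g) c = (\<Sum>f'\<in>UNIV. if f' = f then (\<Sum>g'\<in>UNIV. if g' = g then bcomp f' g' c else 0) else 0)"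
    unfolding mcomp_def cobs_UNIV bas_def by (intro sum.cong refl) (auto intro: sum.cong)
  also have "\<dots> = bcomp f g c"
    by (simp add: sum.delta[OF finite_cob])
  finally show "mcomp (bas f) (bas g) c = bcomp f g c" .
qed

lemma Fam_eq: "Fam \<delta> t \<delta> = (if \<delta> = 0 then bas (D1 t False) else bas (Sd' t))"
  by (simp add: Fam_def)
lemma Fam_gt: "m > \<delta> \<Longrightarrow> Fam \<delta> t m = bas (DE t False)"
  by (simp add: Fam_def)
lemma Fam_lt: "m < \<delta> \<Longrightarrow> Fam \<delta> t m = 0"
  by (simp add: Fam_def)

lemma Fam_comp:
  assumes "\<delta>2 \<le> m"
  shows "mcomp (Fam \<delta>1 t1 (m - \<delta>2)) (Fam \<delta>2 t2 m) = (if t1 \<and> t2 then 0 else Fam (\<delta>1 + \<delta>2) (t1 \<or> t2) m)"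
proof -
  consider "m < \<delta>1 + \<delta>2" | "m = \<delta>1 + \<delta>2" | "m > \<delta>1 + \<delta>2" by linarith
  then show ?thesis
  proof cases
    case 1 then show ?thesis using assms by (simp add: Fam_lt)
  next
    case 2
    show ?thesis
    proof (cases "\<delta>1 = 0")
      case True
      show ?thesis
      proof (cases "\<delta>2 = 0")
        case True
        then show ?thesis using 2 \<open>\<delta>1 = 0\<close> by (cases t1; cases t2) (simp_all add: Fam_eq mcomp_bas)
      next
        case False
        then show ?thesis using 2 \<open>\<delta>1 = 0\<close> by (cases t1; cases t2) (simp_all add: Fam_eq mcomp_bas nd_def)
      qed
    next
      case False
      have a: "Fam \<delta>1 t1 (m - \<delta>2) = bas (Sd' t1)" using 2 False by (simp add: Fam_eq)
      have b: "Fam \<delta>2 t2 m = bas (DE t2 False)" using 2 False by (simp add: Fam_gt)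
      have c: "Fam (\<delta>1 + \<delta>2) (t1 \<or> t2) m = bas (Sd' (t1 \<or> t2))" using 2 False by (simp add: Fam_eq)
      show ?thesis unfolding a b c by (cases t1; cases t2) (simp_all add: mcomp_bas nd_def)
    qed
  next
    case 3
    have a: "Fam \<delta>1 t1 (m - \<delta>2) = bas (DE t1 False)" using 3 by (simp add: Fam_gt)
    have b: "Fam \<delta>2 t2 m = bas (DE t2 False)" using 3 by (simp add: Fam_gt)
    have c: "Fam (\<delta>1 + \<delta>2) (t1 \<or> t2) m = bas (DE (t1 \<or> t2) False)" using 3 by (simp add: Fam_gt)
    show ?thesis unfolding a b c by (cases t1; cases t2) (simp_all add: mcomp_bas)
  qed
qed


lemma ecomp_sup:
  assumes "finite S" "{e. G e \<noteq> 0} \<subseteq> S"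
  shows "ecomp F G d m = (\<Sum>e\<in>S. if int m + e \<ge> 0 then mcomp (F (d - e) (nat (int m + e))) (G e m) else 0)"
  unfolding ecomp_def
proof (rule sum.mono_neutral_left[OF assms(1) assms(2)])
  show "\<forall>i\<in>S - {e. G e \<noteq> 0}. (if 0 \<le> int m + i then mcomp (F (d - i) (nat (int m + i))) (G i m) else 0) = 0"
    by auto
qed

lemma ecomp_single:
  assumes "\<forall>e. e \<noteq> e0 \<longrightarrow> G e = 0"
  shows "ecomp F G d m = (if int m + e0 \<ge> 0 then mcomp (F (d - e0) (nat (int m + e0))) (G e0 m) else 0)"
proof -
  have "{e. G e \<noteq> 0} \<subseteq> {e0}" using assms by auto
  from ecomp_sup[OF _ this] show ?thesis by simp
qed

lemma FamE_app: "FamE \<delta> t d m = (if d = - int \<delta> then Fam \<delta> t m else 0)"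
  by (simp add: FamE_def)

lemma FamE_supp: "\<forall>e. e \<noteq> - int \<delta> \<longrightarrow> FamE \<delta> t e = 0"
  by (auto simp: FamE_def)

lemma Fam_lt_int: "int m < int \<delta> \<Longrightarrow> Fam \<delta> t m = 0"
  by (simp add: Fam_lt)

lemma FamE_comp: "ecomp (FamE \<delta>1 t1) (FamE \<delta>2 t2) = (if t1 \<and> t2 then 0 else FamE (\<delta>1 + \<delta>2) (t1 \<or> t2))"
proof (rule ext, rule ext)
  fix d m
  have "ecomp (FamE \<delta>1 t1) (FamE \<delta>2 t2) d m =
     (if int m - int \<delta>2 \<ge> 0 then mcomp (FamE \<delta>1 t1 (d + int \<delta>2) (nat (int m - int \<delta>2))) (Fam \<delta>2 t2 m) else 0)"
    by (simp add: ecomp_single[OF FamE_supp] FamE_app)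
  also have "\<dots> = (if t1 \<and> t2 then 0 else FamE (\<delta>1 + \<delta>2) (t1 \<or> t2)) d m"
  proof (cases "\<delta>2 \<le> m")
    case True
    have n: "nat (int m - int \<delta>2) = m - \<delta>2" using True by simp
    show ?thesis using True Fam_comp[OF True, of \<delta>1 t1 t2] by (auto simp: n FamE_app)
  next
    case False
    then show ?thesis by (auto simp: FamE_app Fam_lt)
  qed
  finally show "ecomp (FamE \<delta>1 t1) (FamE \<delta>2 t2) d m = (if t1 \<and> t2 then 0 else FamE (\<delta>1 + \<delta>2) (t1 \<or> t2)) d m" .
qed

lemma IdP_FamE: "IdP = FamE 0 False"
  by (intro ext) (simp add: IdP_def FamE_def Fam_def)
lemma bP_FamE: "bP = FamE 0 True"
  by (intro ext) (simp add: bP_def FamE_def Fam_def)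
lemma uP_FamE: "uP = FamE 2 False"
  by (intro ext) (auto simp add: uP_def FamE_def Fam_def)
lemma wP_FamE: "wP = FamE 3 True"
  by (intro ext) (auto simp add: wP_def FamE_def Fam_def)

lemma epow_uP: "epow uP i = FamE (2 * i) False"
  by (induct i) (simp_all add: IdP_FamE uP_FamE FamE_comp)

lemma plus_endo: "((F::endo) + G) a b = F a b + G a b" by simp
lemma minus_endo: "((F::endo) - G) a b = F a b - G a b" by simp
lemma zero_endo: "(0::endo) a b = 0" by simp

lemma ecomp_add1: "ecomp (F + F') G = ecomp F G + ecomp F' G"
proof (rule ext, rule ext)
  fix d m
  have "ecomp (F + F') G d m = (\<Sum>e\<in>{e. G e \<noteq> 0}. (if int m + e \<ge> 0 then mcomp (F (d - e) (nat (int m + e))) (G e m) else 0) + (if int m + e \<ge> 0 then mcomp (F' (d - e) (nat (int m + e))) (G e m) else 0))"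
    unfolding ecomp_def by (rule sum.cong) (simp_all add: plus_endo mcomp_add1)
  then show "ecomp (F + F') G d m = (ecomp F G + ecomp F' G) d m"
    unfolding plus_endo by (simp add: sum.distrib ecomp_def)
qed

lemma ecomp_smul1: "ecomp (smul c F) G = smul c (ecomp F G)"
proof (rule ext, rule ext)
  fix d m
  show "ecomp (smul c F) G d m = smul c (ecomp F G) d m"
    unfolding ecomp_def smul_def
  proof (rule ext)
    fix x
    show "(\<Sum>e\<in>{e. G e \<noteq> 0}. if 0 \<le> int m + e then mcomp (\<lambda>x. c * F (d - e) (nat (int m + e)) x) (G e m) else 0) x =
      c * (\<Sum>e\<in>{e. G e \<noteq> 0}. if 0 \<le> int m + e then mcomp (F (d - e) (nat (int m + e))) (G e m) else 0) x"
      unfolding sum_apply_fun sum_distrib_left by (intro sum.cong refl) (simp add: mcomp_scal1)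
  qed
qed

lemma ecomp_zero1[simp]: "ecomp 0 G = 0"
proof (rule ext, rule ext)
  fix d m show "ecomp 0 G d m = 0 d m" unfolding ecomp_def zero_endo by (simp cong: if_cong)
qed

lemma ecomp_sum1: "ecomp (\<Sum>i\<in>I. F i) G = (\<Sum>i\<in>I. ecomp (F i) G)"
proof (induct I rule: infinite_finite_induct)
  case (insert x I)
  then show ?case by (simp only: sum.insert[OF insert(1,2)] ecomp_add1 insert(3))
next
  case (infinite A) then show ?case by (simp only: sum.infinite[OF infinite] ecomp_zero1)
next
  case empty then show ?case by (simp only: sum.empty ecomp_zero1)
qed

lemma pev_uP: "pev p uP = (\<Sum>i\<le>degree p. smul (coeff p i) (FamE (2 * i) False))"
  by (simp add: pev_def epow_uP)

lemma Phi_sum: "Phi p q r = (\<Sum>i\<le>degree p. smul (coeff p i) (FamE (2 * i) False))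
   + (\<Sum>i\<le>degree q. smul (coeff q i) (FamE (2 * i + 3) True))
   + (\<Sum>i\<le>degree r. smul (coeff r i) (FamE (2 * i) True))"
  by (simp add: Phi_def pev_uP ecomp_sum1 ecomp_smul1 wP_FamE bP_FamE FamE_comp)


lemma typed_add: "typed d g \<Longrightarrow> typed d h \<Longrightarrow> typed d (g + h)"
  unfolding typed_def by (auto intro: hom_add split: if_splits)
lemma typed_diff: "typed d g \<Longrightarrow> typed d h \<Longrightarrow> typed d (g - h)"
  unfolding typed_def by (auto intro: hom_diff split: if_splits)
lemma typed_scal: "typed d g \<Longrightarrow> typed d (\<lambda>m x. c * g m x)"
proof -
  assume a: "typed d g"
  { fix m
    have "if int m + d \<ge> 0 then (\<lambda>x. c * g m x) \<in> hom (Cobj m) (Cobj (nat (int m + d))) else (\<lambda>x. c * g m x) = 0"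
      using a unfolding typed_def by (auto intro: hom_scal split: if_splits) }
  then show ?thesis unfolding typed_def by blast
qed
lemma typed_zero: "typed d 0"
  unfolding typed_def by simp

lemma EndP_add: "F \<in> EndP \<Longrightarrow> G \<in> EndP \<Longrightarrow> F + G \<in> EndP"
proof -
  assume a: "F \<in> EndP" and b: "G \<in> EndP"
  have "{d. (F + G) d \<noteq> 0} \<subseteq> {d. F d \<noteq> 0} \<union> {d. G d \<noteq> 0}" by auto
  then have "finite {d. (F + G) d \<noteq> 0}" using a b by (auto simp: EndP_iff intro: finite_subset)
  moreover have "typed d ((F + G) d)" for d using a b by (auto simp: EndP_iff intro: typed_add)
  ultimately show ?thesis by (simp add: EndP_iff)
qed

lemma EndP_diff: "F \<in> EndP \<Longrightarrow> G \<in> EndP \<Longrightarrow> F - G \<in> EndP"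
proof -
  assume a: "F \<in> EndP" and b: "G \<in> EndP"
  have "{d. (F - G) d \<noteq> 0} \<subseteq> {d. F d \<noteq> 0} \<union> {d. G d \<noteq> 0}" by auto
  then have "finite {d. (F - G) d \<noteq> 0}" using a b by (auto simp: EndP_iff intro: finite_subset)
  moreover have "typed d ((F - G) d)" for d using a b by (auto simp: EndP_iff intro: typed_diff)
  ultimately show ?thesis by (simp add: EndP_iff)
qed

lemma EndP_zero: "0 \<in> EndP"
  by (simp add: EndP_iff typed_zero)

lemma EndP_smul: "F \<in> EndP \<Longrightarrow> smul c F \<in> EndP"
proof -
  assume a: "F \<in> EndP"
  have "{d. smul c F d \<noteq> 0} \<subseteq> {d. F d \<noteq> 0}"
  proof
    fix d assume "d \<in> {d. smul c F d \<noteq> 0}"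
    moreover have "F d = 0 \<Longrightarrow> smul c F d = 0" by (auto simp: smul_def fun_eq_iff)
    ultimately show "d \<in> {d. F d \<noteq> 0}" by auto
  qed
  then have "finite {d. smul c F d \<noteq> 0}" using a by (auto simp: EndP_iff intro: finite_subset)
  moreover have "typed d (smul c F d)" for d using a typed_scal[of d "F d" c] by (auto simp: EndP_iff smul_def)
  ultimately show ?thesis by (simp add: EndP_iff)
qed

lemma EndP_sum: "(\<And>i. i \<in> I \<Longrightarrow> F i \<in> EndP) \<Longrightarrow> (\<Sum>i\<in>I. F i) \<in> EndP"
  by (induct I rule: infinite_finite_induct) (auto intro: EndP_add EndP_zero)

lemma Dsl_add: "Dsl d (\<lambda>m. g m + h m) m = Dsl d g m + Dsl d h m"
  by (rule mor_eqI) (simp_all add: Dsl_def mc_simps algebra_simps)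
lemma Dsl_diff: "Dsl d (\<lambda>m. g m - h m) m = Dsl d g m - Dsl d h m"
  by (rule mor_eqI) (simp_all add: Dsl_def mc_simps algebra_simps)
lemma Dsl_scal: "Dsl d (\<lambda>m x. c * g m x) m = (\<lambda>x. c * Dsl d g m x)"
  by (rule mor_eqI) (simp_all add: Dsl_def mc_simps algebra_simps)
lemma Dsl_zero: "Dsl d (\<lambda>m. 0) m = 0"
  by (rule mor_eqI) (simp_all add: Dsl_def mc_simps)

lemma dEnd_add: "dEnd (F + G) = dEnd F + dEnd G"
proof (rule ext, rule ext)
  fix d m
  have "(F + G) (d - 1) = (\<lambda>m. F (d - 1) m + G (d - 1) m)" by auto
  then show "dEnd (F + G) d m = (dEnd F + dEnd G) d m"
    unfolding plus_endo dEnd_Dsl by (simp only: Dsl_add)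
qed

lemma dEnd_diff: "dEnd (F - G) = dEnd F - dEnd G"
proof (rule ext, rule ext)
  fix d m
  have "(F - G) (d - 1) = (\<lambda>m. F (d - 1) m - G (d - 1) m)" by auto
  then show "dEnd (F - G) d m = (dEnd F - dEnd G) d m"
    unfolding minus_endo dEnd_Dsl by (simp only: Dsl_diff)
qed

lemma dEnd_smul: "dEnd (smul c F) = smul c (dEnd F)"
proof (rule ext, rule ext)
  fix d m
  show "dEnd (smul c F) d m = smul c (dEnd F) d m"
    unfolding dEnd_Dsl smul_def by (simp only: Dsl_scal)
qed

lemma dEnd_zero: "dEnd 0 = 0"
proof (rule ext, rule ext)
  fix d m
  have "(0::endo) (d - 1) = (\<lambda>m. 0)" by auto
  then show "dEnd 0 d m = 0 d m"
    unfolding dEnd_Dsl zero_endo by (simp only: Dsl_zero)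
qed

lemma dEnd_sum: "dEnd (\<Sum>i\<in>I. F i) = (\<Sum>i\<in>I. dEnd (F i))"
proof (induct I rule: infinite_finite_induct)
  case (insert x I)
  then show ?case by (simp only: sum.insert[OF insert(1,2)] dEnd_add insert(3))
next
  case (infinite A) then show ?case by (simp only: sum.infinite[OF infinite] dEnd_zero)
next
  case empty then show ?case by (simp only: sum.empty dEnd_zero)
qed


section \<open>The generators are cycles\<close>

lemma bas_hom: "bas c \<in> hom (src c) (tgt c)"
  by (simp add: hom_def bas_def)

lemma typed_Fam: "typed (- int \<delta>) (Fam \<delta> t)"
  unfolding typed_def
proof
  fix m
  show "if int m + - int \<delta> \<ge> 0 then Fam \<delta> t m \<in> hom (Cobj m) (Cobj (nat (int m + - int \<delta>))) else Fam \<delta> t m = 0"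
  proof (cases "m < \<delta>")
    case True then show ?thesis by (simp add: Fam_lt)
  next
    case False
    show ?thesis
    proof (cases "m = \<delta>")
      case True
      then show ?thesis using bas_hom[of "D1 t False"] bas_hom[of "Sd' t"] by (simp add: Fam_eq Cobj_def)
    next
      case F2: False
      then have "m > \<delta>" using False by simp
      then show ?thesis using bas_hom[of "DE t False"] by (simp add: Fam_gt Cobj_def)
    qed
  qed
qed

lemma FamE_EndP: "FamE \<delta> t \<in> EndP"
proof -
  have "{d. FamE \<delta> t d \<noteq> 0} \<subseteq> {- int \<delta>}" using FamE_supp by auto
  then have "finite {d. FamE \<delta> t d \<noteq> 0}" by (rule finite_subset) simp
  moreover have "typed d (FamE \<delta> t d)" for d
  proof (cases "d = - int \<delta>")
    case True
    then have "FamE \<delta> t d = Fam \<delta> t" by (auto simp: FamE_def)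
    then show ?thesis using typed_Fam True by simp
  next
    case False
    then have "FamE \<delta> t d = 0" by (auto simp: FamE_def)
    then show ?thesis by (simp add: typed_zero)
  qed
  ultimately show ?thesis by (simp add: EndP_iff)
qed

lemma Dsl_Fam:
  assumes ok: "even \<delta> \<or> (t \<and> \<delta> \<ge> 3)"
  shows "Dsl (1 - int \<delta>) (Fam \<delta> t) m = 0"
proof -
  consider "m + 1 < \<delta>" | "m + 1 = \<delta>" | "m = \<delta>" | "m > \<delta>" by linarith
  then show ?thesis
  proof cases
    case 1 then show ?thesis by (simp add: Dsl_def)
  next
    case 2
    then have d0: "\<delta> \<noteq> 0" by simp
    have F: "Fam \<delta> t (Suc m) = bas (Sd' t)" using 2 d0 by (simp add: Fam_eq)
    have Y: "mcomp (Fam \<delta> t (Suc m)) (dP m) = 0"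
    proof (cases "even \<delta>")
      case True
      have om: "odd m" using 2 True by auto
      then obtain k where k0: "m = Suc k" by (cases m) auto
      then have k: "m = Suc k" "even k" using om by auto
      show ?thesis unfolding F using True k by (intro mor_eqI) (simp_all add: mc_simps bas_def)
    next
      case False
      then have t: t and k0: "m \<ge> 2" using ok 2 by auto
      have om: "even m" using 2 False by auto
      obtain k where k0: "m = Suc k" using k0 by (cases m) auto
      then have k: "m = Suc k" "odd k" using om by auto
      show ?thesis unfolding F using False k t by (intro mor_eqI) (simp_all add: mc_simps bas_def)
    qed
    show ?thesis using 2 Y by (simp add: Dsl_def)
  next
    case 3
    have F2: "Fam \<delta> t (Suc m) = bas (DE t False)" using 3 by (simp add: Fam_gt)
    show ?thesis
    proof (cases "\<delta> = 0")
      case True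
      have e: "Dsl (1 - int \<delta>) (Fam \<delta> t) m = mcomp (dP 0) (bas (D1 t False)) - mcomp (bas (DE t False)) (dP 0)"
        using 3 True F2 by (simp add: Dsl_def Fam_eq)
      show ?thesis unfolding e by (cases t) (simp_all add: mcomp_bas dP_def nd_def)
    next
      case False
      obtain k where k: "m = Suc k" using 3 False by (cases m) auto
      have e: "Dsl (1 - int \<delta>) (Fam \<delta> t) m = mcomp (dP 0) (bas (Sd' t)) - (if even \<delta> then mcomp (bas (DE t False)) (dP m) else - mcomp (bas (DE t False)) (dP m))"
        using 3 False F2 by (simp add: Dsl_def Fam_eq)
      show ?thesis
      proof (cases "even \<delta>")
        case True
        then have "odd k" using k 3 by simp
        then show ?thesis unfolding e using True k by (intro mor_eqI) (cases t; simp_all add: mc_simps bas_def)+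
      next
        case F3: False
        then have "even k" "t" using k 3 ok by auto
        then show ?thesis unfolding e using F3 k by (intro mor_eqI) (simp_all add: mc_simps bas_def)
      qed
    qed
  next
    case 4
    obtain j where j: "m - \<delta> = Suc j" using 4 by (cases "m - \<delta>") auto
    obtain k where k: "m = Suc k" using 4 by (cases m) auto
    have F1: "Fam \<delta> t m = bas (DE t False)" "Fam \<delta> t (Suc m) = bas (DE t False)" using 4 by (simp_all add: Fam_gt)
    have n: "nat (int m + (1 - int \<delta>) - 1) = Suc j" using j 4 by simp
    have e: "Dsl (1 - int \<delta>) (Fam \<delta> t) m = mcomp (dP (Suc j)) (bas (DE t False)) - (if even \<delta> then mcomp (bas (DE t False)) (dP (Suc k)) else - mcomp (bas (DE t False)) (dP (Suc k)))"
      using 4 F1 n k by (simp add: Dsl_def)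
    have "m = \<delta> + Suc j" using j 4 by simp
    then have par: "even j = (even k = even \<delta>)" using k by auto
    show ?thesis
    proof (cases "even \<delta>")
      case True
      then show ?thesis unfolding e using par by (intro mor_eqI) (cases t; cases "even k"; simp_all add: mc_simps bas_def)+
    next
      case False
      then have t using ok by auto
      then show ?thesis unfolding e using par False by (intro mor_eqI) (cases "even k"; simp_all add: mc_simps bas_def)+
    qed
  qed
qed

lemma dEnd_FamE:
  assumes ok: "even \<delta> \<or> (t \<and> \<delta> \<ge> 3)"
  shows "dEnd (FamE \<delta> t) = 0"
proof (rule ext, rule ext)
  fix d m
  show "dEnd (FamE \<delta> t) d m = 0 d m"
  proof (cases "d - 1 = - int \<delta>")
    case True
    then have "FamE \<delta> t (d - 1) = Fam \<delta> t" and "d = 1 - int \<delta>" by (auto simp: FamE_def)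
    then show ?thesis using Dsl_Fam[OF ok] by (simp add: dEnd_Dsl)
  next
    case False
    then have "FamE \<delta> t (d - 1) = (\<lambda>m. 0)" by (auto simp: FamE_def)
    then show ?thesis by (simp add: dEnd_Dsl Dsl_zero)
  qed
qed


lemma smul_zero_endo: "smul c 0 = 0"
  by (simp add: smul_def fun_eq_iff)

lemma sum_smul_FamE_Cyc:
  assumes "\<And>i. i \<in> I \<Longrightarrow> even (f i) \<or> (t \<and> f i \<ge> 3)"
  shows "(\<Sum>i\<in>I. smul (c i) (FamE (f i) t)) \<in> EndP \<and> dEnd (\<Sum>i\<in>I. smul (c i) (FamE (f i) t)) = 0"
proof
  show "(\<Sum>i\<in>I. smul (c i) (FamE (f i) t)) \<in> EndP"
    by (intro EndP_sum EndP_smul FamE_EndP)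
  have "dEnd (\<Sum>i\<in>I. smul (c i) (FamE (f i) t)) = (\<Sum>i\<in>I. smul (c i) (dEnd (FamE (f i) t)))"
    by (simp only: dEnd_sum dEnd_smul)
  also have "\<dots> = 0" using assms by (simp add: dEnd_FamE smul_zero_endo)
  finally show "dEnd (\<Sum>i\<in>I. smul (c i) (FamE (f i) t)) = 0" .
qed

lemma Phi_Cyc: "Phi p q r \<in> Cyc"
proof -
  let ?A = "\<Sum>i\<le>degree p. smul (coeff p i) (FamE (2 * i) False)"
  let ?B = "\<Sum>i\<le>degree q. smul (coeff q i) (FamE (2 * i + 3) True)"
  let ?C = "\<Sum>i\<le>degree r. smul (coeff r i) (FamE (2 * i) True)"
  have A: "?A \<in> EndP \<and> dEnd ?A = 0" by (rule sum_smul_FamE_Cyc) simp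
  have B: "?B \<in> EndP \<and> dEnd ?B = 0" by (rule sum_smul_FamE_Cyc) simp
  have C: "?C \<in> EndP \<and> dEnd ?C = 0" by (rule sum_smul_FamE_Cyc) simp
  show ?thesis unfolding Cyc_def Phi_sum using A B C
    by (simp add: EndP_add dEnd_add)
qed

lemma sum_FamE_app: "(\<Sum>i\<in>I. smul (c i) (FamE (f i) t)) d m x = (\<Sum>i\<in>I. if d = - int (f i) then c i * Fam (f i) t m x else 0)"
  unfolding sum_apply_fun by (intro sum.cong refl) (simp add: smul_def FamE_app)

lemma diag_even: "(\<Sum>i\<le>N. if - int m = - int (2 * i) then g i else 0) = (if even m \<and> m div 2 \<le> N then g (m div 2) else (0::int))"
proof -
  have eq: "(- int m = - int (2 * i)) = (i = m div 2 \<and> even m)" for i by presburger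
  have "(\<Sum>i\<le>N. if - int m = - int (2 * i) then g i else 0) = (\<Sum>i\<le>N. if i = m div 2 then (if even m then g i else 0) else 0)"
    unfolding eq by (intro sum.cong refl) auto
  also have "\<dots> = (if even m \<and> m div 2 \<le> N then g (m div 2) else 0)"
    by (simp add: sum.delta)
  finally show ?thesis .
qed

lemma diag_odd: "(\<Sum>i\<le>N. if - int m = - int (2 * i + 3) then g i else 0) = (if odd m \<and> m \<ge> 3 \<and> (m - 3) div 2 \<le> N then g ((m - 3) div 2) else (0::int))"
proof -
  have eq: "(- int m = - int (2 * i + 3)) = (i = (m - 3) div 2 \<and> odd m \<and> m \<ge> 3)" for i by presburger
  have "(\<Sum>i\<le>N. if - int m = - int (2 * i + 3) then g i else 0) = (\<Sum>i\<le>N. if i = (m - 3) div 2 then (if odd m \<and> m \<ge> 3 then g i else 0) else 0)"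
    unfolding eq by (intro sum.cong refl) auto
  also have "\<dots> = (if odd m \<and> m \<ge> 3 \<and> (m - 3) div 2 \<le> N then g ((m - 3) div 2) else 0)"
    by (simp add: sum.delta)
  finally show ?thesis .
qed

lemma coeff_cut: "(if k \<le> degree p then coeff p k * a else 0) = coeff p k * (a::int)"
  by (auto simp: coeff_eq_0)

lemma Phi_diag: "Phi p q r (- int m) m x = (if even m then coeff p (m div 2) * Fam m False m x + coeff r (m div 2) * Fam m True m x
   else if m \<ge> 3 then coeff q ((m - 3) div 2) * Fam m True m x else 0)"
proof -
  have "Phi p q r (- int m) m x =
     (if even m \<and> m div 2 \<le> degree p then coeff p (m div 2) * Fam (2 * (m div 2)) False m x else 0)
     + (if odd m \<and> m \<ge> 3 \<and> (m - 3) div 2 \<le> degree q then coeff q ((m - 3) div 2) * Fam (2 * ((m - 3) div 2) + 3) True m x else 0)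
     + (if even m \<and> m div 2 \<le> degree r then coeff r (m div 2) * Fam (2 * (m div 2)) True m x else 0)"
    unfolding Phi_sum plus_endo plus_fun_apply sum_FamE_app diag_even diag_odd by simp
  also have "\<dots> = (if even m then coeff p (m div 2) * Fam m False m x + coeff r (m div 2) * Fam m True m x
     else if m \<ge> 3 then coeff q ((m - 3) div 2) * Fam m True m x else 0)"
  proof (cases "even m")
    case True
    then have "2 * (m div 2) = m" by simp
    then show ?thesis using True by (auto simp: coeff_eq_0)
  next
    case False
    then have "m \<ge> 3 \<Longrightarrow> 2 * ((m - 3) div 2) + 3 = m" by presburger
    then show ?thesis using False by (auto simp: coeff_eq_0)
  qed
  finally show ?thesis .
qed


section \<open>Every cycle is homologous to some Phi\<close>

lemma poly_of_fun: assumes "\<And>i. i > N \<Longrightarrow> f i = (0::int)" shows "\<exists>p. \<forall>i. coeff p i = f i"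
proof -
  have "coeff (Abs_poly f) = f" using coeff_Abs_poly[of N f] assms by blast
  then show ?thesis by metis
qed

lemma Fam_self: "Fam m t m = (if m = 0 then bas (D1 t False) else bas (Sd' t))"
  by (simp add: Fam_def)

lemma Cyc_bound:
  assumes "F \<in> EndP"
  obtains N where "\<And>k. k > N \<Longrightarrow> F (- int k) = 0"
proof -
  have fin: "finite {d. F d \<noteq> 0}" using assms by (simp add: EndP_iff)
  let ?K = "(\<lambda>k::nat. - int k) -` {d. F d \<noteq> 0}"
  have finK: "finite ?K" by (rule finite_vimageI[OF fin]) (simp add: inj_def)
  define N where "N = Max (insert 0 ?K)"
  have "F (- int k) = 0" if "k > N" for k
  proof (rule ccontr)
    assume "F (- int k) \<noteq> 0"
    then have "k \<in> ?K" by simp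
    then have "k \<le> N" unfolding N_def using finK by simp
    then show False using that by simp
  qed
  then show ?thesis using that by blast
qed

theorem part_B:
  assumes FC: "F \<in> Cyc"
  shows "\<exists>p q r. F - Phi p q r \<in> Bd"
proof -
  have FE: "F \<in> EndP" and Fc: "dEnd F = 0" using FC by (auto simp: Cyc_def)
  obtain N where N: "\<And>k. k > N \<Longrightarrow> F (- int k) = 0" using Cyc_bound[OF FE] by blast
  define pc where "pc k = (if k = 0 then F 0 0 (D1 False False) else F (- int (2 * k)) (2 * k) (Sd' False))" for k
  define rc where "rc k = (if k = 0 then F 0 0 (D1 True False) - F 0 0 (D1 False True) else F (- int (2 * k)) (2 * k) (Sd' True))" for k
  define qc where "qc k = F (- int (2 * k + 3)) (2 * k + 3) (Sd' True)" for k
  have "pc i = 0" if "i > N" for i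
  proof -
    have "2 * i > N" "i \<noteq> 0" using that by auto
    then show ?thesis using N[of "2 * i"] by (simp add: pc_def)
  qed
  then obtain p where p: "\<And>i. coeff p i = pc i" using poly_of_fun by blast
  have "rc i = 0" if "i > N" for i
  proof -
    have "2 * i > N" "i \<noteq> 0" using that by auto
    then show ?thesis using N[of "2 * i"] by (simp add: rc_def)
  qed
  then obtain r where r: "\<And>i. coeff r i = rc i" using poly_of_fun by blast
  have "qc i = 0" if "i > N" for i
  proof -
    have "2 * i + 3 > N" using that by auto
    then show ?thesis using N[of "2 * i + 3"] by (simp add: qc_def)
  qed
  then obtain q where q: "\<And>i. coeff q i = qc i" using poly_of_fun by blast
  define G where "G = F - Phi p q r"
  have PC: "Phi p q r \<in> Cyc" by (rule Phi_Cyc)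
  have GE: "G \<in> EndP" unfolding G_def using FE PC by (auto simp: Cyc_def intro: EndP_diff)
  have Gc: "dEnd G = 0" unfolding G_def using Fc PC by (simp add: Cyc_def dEnd_diff)
  have ob: "\<forall>d m. int m + d = 0 \<longrightarrow> obst m (G d m)"
  proof (intro allI impI)
    fix d m assume "int m + d = 0"
    then have d: "d = - int m" by simp
    have Gx: "G d m x = F (- int m) m x - (if even m then coeff p (m div 2) * Fam m False m x + coeff r (m div 2) * Fam m True m x
      else if m \<ge> 3 then coeff q ((m - 3) div 2) * Fam m True m x else 0)" for x
      unfolding G_def d minus_endo minus_apply Phi_diag by (rule refl)
    show "obst m (G d m)"
    proof (cases "m = 0")
      case True
      then show ?thesis unfolding obst_def using Gx by (simp add: Phi_diag Fam_self p r pc_def rc_def bas_def)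
    next
      case m0: False
      show ?thesis
      proof (cases "m = 1")
        case True then show ?thesis by (simp add: obst_def)
      next
        case m1: False
        show ?thesis
        proof (cases "even m")
          case True
          then have e: "2 * (m div 2) = m" "m div 2 \<noteq> 0" "0 < m" "m \<noteq> Suc 0" using m0 m1 by auto
          show ?thesis unfolding obst_def using Gx True m0 m1 e
            by (simp add: Phi_diag Fam_self p r pc_def rc_def bas_def)
        next
          case False
          then have e: "2 * ((m - 3) div 2) + 3 = m" "m \<ge> 3" using m0 m1 by presburger+
          show ?thesis unfolding obst_def using Gx False m0 m1 e
            by (simp add: Phi_diag Fam_self q qc_def bas_def)
        qed
      qed
    qed
  qed
  have "G \<in> Bd" by (rule core[OF GE Gc ob])
  then show ?thesis unfolding G_def by blast
qed


section \<open>Which Phi are boundaries\<close>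

lemma bd_diag:
  fixes H :: endo and m :: nat
  assumes HE: "H \<in> EndP"
  defines "X \<equiv> dEnd H (- int m) m"
  shows "m = 0 \<Longrightarrow> X (D1 False False) = 0 \<and> X (D1 True False) = X (D1 False True)"
    and "m > 0 \<Longrightarrow> even m \<Longrightarrow> X (Sd' False) = 0 \<and> even (X (Sd' True))"
    and "odd m \<Longrightarrow> X (Sd' True) = 0"
proof -
  define Y where "Y = H (- int m - 1) (Suc m)"
  have "typed (- int m - 1) (H (- int m - 1))" using HE by (simp add: EndP_iff)
  then have "Y \<in> hom (Cobj (Suc m)) (Cobj (nat (int (Suc m) + (- int m - 1))))"
    unfolding Y_def by (rule typedD1) simp
  then have Yh: "Y \<in> hom E1 One" by simp
  note h = homD[OF Yh]
  have XY: "X = (if even (- int m - 1) then - mcomp Y (dP m) else mcomp Y (dP m))"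
    unfolding X_def dEnd_Dsl Dsl_def Y_def by simp
  have om: "odd (- int m - 1) = even m" by simp
  show "m = 0 \<Longrightarrow> X (D1 False False) = 0 \<and> X (D1 True False) = X (D1 False True)"
    unfolding XY by (simp add: mc_simps h)
  show "m > 0 \<Longrightarrow> even m \<Longrightarrow> X (Sd' False) = 0 \<and> even (X (Sd' True))"
  proof -
    assume "m > 0" "even m"
    then obtain k where k: "m = Suc k" "odd k" by (cases m) auto
    then show ?thesis unfolding XY by (simp add: mc_simps h)
  qed
  show "odd m \<Longrightarrow> X (Sd' True) = 0"
  proof -
    assume "odd m"
    then obtain k where k: "m = Suc k" "even k" by (cases m) auto
    then show ?thesis unfolding XY by (simp add: mc_simps h)
  qed
qed

lemma pCons02: "[:0, 2:] * s = pCons 0 (smult (2::int) s)"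
  by (simp add: mult_pCons_left)

lemma dvd02:
  assumes "coeff r 0 = 0" "\<And>k. even (coeff r k)"
  shows "[:0, 2:] dvd (r::int poly)"
proof -
  have "[:0, 1:] dvd r" using assms(1) by (simp add: dvd_iff_poly_eq_0 poly_0_coeff_0)
  then obtain r' where r': "r = [:0, 1:] * r'" by (auto simp: dvd_def)
  have rp: "r = pCons 0 r'" using r' by (simp add: mult_pCons_left)
  have ev: "even (coeff r' k)" for k using assms(2)[of "Suc k"] rp by simp
  define s where "s = map_poly (\<lambda>x. x div 2) r'"
  have "r' = smult 2 s"
    by (rule poly_eqI) (simp add: s_def coeff_map_poly ev)
  then have "r = [:0, 2:] * s" using rp by (simp add: pCons02)
  then show ?thesis by (rule dvdI)
qed

theorem part_C: "Phi p q r \<in> Bd \<longleftrightarrow> (p = 0 \<and> q = 0 \<and> [:0, 2:] dvd r)"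
proof
  assume "Phi p q r \<in> Bd"
  then obtain H where HE: "H \<in> EndP" and PH: "Phi p q r = dEnd H" by (auto simp: Bd_def)
  have Pd: "dEnd H (- int m) m x = (if even m then coeff p (m div 2) * Fam m False m x + coeff r (m div 2) * Fam m True m x
     else if m \<ge> 3 then coeff q ((m - 3) div 2) * Fam m True m x else 0)" for m x
    unfolding PH[symmetric] Phi_diag by (rule refl)
  have p0: "coeff p 0 = 0" and r0: "coeff r 0 = 0"
    using bd_diag(1)[OF HE, of 0] Pd[of 0] by (simp_all add: Fam_self bas_def)
  have pk: "coeff p k = 0" for k
  proof (cases k)
    case 0 then show ?thesis using p0 by simp
  next
    case (Suc j)
    have "even (2 * k)" "2 * k > 0" "2 * k div 2 = k" using Suc by auto
    then show ?thesis using bd_diag(2)[OF HE, of "2 * k"] Pd[of "2 * k"] Suc by (simp add: Fam_self bas_def)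
  qed
  have rk: "even (coeff r k)" for k
  proof (cases k)
    case 0 then show ?thesis using r0 by simp
  next
    case (Suc j)
    have "even (2 * k)" "2 * k > 0" "2 * k div 2 = k" using Suc by auto
    then show ?thesis using bd_diag(2)[OF HE, of "2 * k"] Pd[of "2 * k"] Suc by (simp add: Fam_self bas_def)
  qed
  have qk: "coeff q k = 0" for k
  proof -
    have "odd (2 * k + 3)" "(2 * k + 3 - 3) div 2 = k" by auto
    then show ?thesis using bd_diag(3)[OF HE, of "2 * k + 3"] Pd[of "2 * k + 3"] by (simp add: Fam_self bas_def)
  qed
  show "p = 0 \<and> q = 0 \<and> [:0, 2:] dvd r"
    using pk qk dvd02[OF r0 rk] by (auto intro: poly_eqI)
next
  assume "p = 0 \<and> q = 0 \<and> [:0, 2:] dvd r"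
  then obtain s where pq: "p = 0" "q = 0" and rs: "r = [:0, 2:] * s" by (auto simp: dvd_def)
  have cr: "coeff r 0 = 0" "coeff r (Suc k) = 2 * coeff s k" for k
    unfolding rs pCons02 by simp_all
  have PC: "Phi p q r \<in> Cyc" by (rule Phi_Cyc)
  have ob: "\<forall>d m. int m + d = 0 \<longrightarrow> obst m (Phi p q r d m)"
  proof (intro allI impI)
    fix d m assume "int m + d = 0"
    then have d: "d = - int m" by simp
    have Px: "Phi p q r d m x = (if even m then coeff p (m div 2) * Fam m False m x + coeff r (m div 2) * Fam m True m x
       else if m \<ge> 3 then coeff q ((m - 3) div 2) * Fam m True m x else 0)" for x
      unfolding d Phi_diag by (rule refl)
    show "obst m (Phi p q r d m)"
    proof (cases "m = 0")
      case True then show ?thesis unfolding obst_def using Px by (simp add: Fam_self bas_def pq cr)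
    next
      case m0: False
      show ?thesis
      proof (cases "even m")
        case True
        then obtain j where j: "m div 2 = Suc j" using m0 by (cases "m div 2") auto
        show ?thesis unfolding obst_def using Px True m0 j by (simp add: Fam_self bas_def pq cr)
      next
        case False
        then show ?thesis unfolding obst_def using Px m0 by (simp add: Fam_self bas_def pq)
      qed
    qed
  qed
  show "Phi p q r \<in> Bd" using PC ob core by (auto simp: Cyc_def)
qed


section \<open>Products of cycles and boundaries\<close>

lemma mcomp_sum1: "mcomp (\<Sum>i\<in>I. X i) Y = (\<Sum>i\<in>I. mcomp (X i) Y)"
proof (induct I rule: infinite_finite_induct)
  case (insert x I)
  then show ?case by (simp only: sum.insert[OF insert(1,2)] mcomp_add1 insert(3))
qed simp_all

lemma mcomp_sum2: "mcomp Y (\<Sum>i\<in>I. X i) = (\<Sum>i\<in>I. mcomp Y (X i))"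
proof (induct I rule: infinite_finite_induct)
  case (insert x I)
  then show ?case by (simp only: sum.insert[OF insert(1,2)] mcomp_add2 insert(3))
qed simp_all

definition sg :: "int \<Rightarrow> mor \<Rightarrow> mor" where
  "sg a X = (if even a then X else - X)"

lemma sg_mcomp1: "mcomp (sg a X) Y = sg a (mcomp X Y)"
  by (simp add: sg_def mcomp_neg1)
lemma sg_mcomp2: "mcomp Y (sg a X) = sg a (mcomp Y X)"
  by (simp add: sg_def mcomp_neg2)
lemma sg_sg: "sg a (sg b X) = sg (a + b) X"
  by (simp add: sg_def)
lemma sg_zero[simp]: "sg a 0 = 0"
  by (simp add: sg_def)
lemma sg_if: "sg a (if P then X else 0) = (if P then sg a X else 0)"
  by simp
lemma sg_diff: "sg a (X - Y) = sg a X - sg a Y"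
  by (simp add: sg_def)
lemma sg_sum: "sg a (\<Sum>i\<in>I. X i) = (\<Sum>i\<in>I. sg a (X i))"
  by (simp add: sg_def sum_negf)
lemma sg_eqI: "X = sg a Y \<Longrightarrow> sg a X = Y"
  by (simp add: sg_def split: if_splits)

lemma Dsl_sg: "Dsl d h m = (if int m + d - 1 \<ge> 0 then mcomp (dP (nat (int m + d - 1))) (h m) else 0)
     - sg (d - 1) (if int m + d \<ge> 0 then mcomp (h (Suc m)) (dP m) else 0)"
  by (simp add: Dsl_def sg_def)

lemma cyc_rel:
  assumes "G \<in> Cyc"
  shows "(if int m + e \<ge> 0 then mcomp (dP (nat (int m + e))) (G e m) else 0)
       = sg e (if int m + e + 1 \<ge> 0 then mcomp (G e (Suc m)) (dP m) else 0)"
proof -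
  have "dEnd G (e + 1) m = 0" using assms by (simp add: Cyc_def)
  then have "Dsl (e + 1) (G e) m = 0" by (simp add: dEnd_Dsl)
  then have "(if int m + (e + 1) - 1 \<ge> 0 then mcomp (dP (nat (int m + (e + 1) - 1))) (G e m) else 0)
     = sg (e + 1 - 1) (if int m + (e + 1) \<ge> 0 then mcomp (G e (Suc m)) (dP m) else 0)"
    unfolding Dsl_sg by (rule right_minus_eq[THEN iffD1])
  moreover have "int m + (e + 1) - 1 = int m + e" "e + 1 - 1 = e" "int m + (e + 1) = int m + e + 1" by simp_all
  ultimately show ?thesis by (simp only:)
qed

lemma dEnd_EndP:
  assumes HE: "H \<in> EndP"
  shows "dEnd H \<in> EndP"
proof -
  have fin: "finite {d. H d \<noteq> 0}" and ty: "\<And>d. typed d (H d)" using HE by (auto simp: EndP_iff)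
  have "{d. dEnd H d \<noteq> 0} \<subseteq> (\<lambda>d. d + 1) ` {d. H d \<noteq> 0}"
  proof
    fix d assume a: "d \<in> {d. dEnd H d \<noteq> 0}"
    have "H (d - 1) \<noteq> 0"
    proof
      assume "H (d - 1) = 0"
      then have z: "H (d - 1) = (\<lambda>m. 0)" by auto
      have "dEnd H d m = 0" for m by (simp only: dEnd_Dsl z Dsl_zero)
      then have "dEnd H d = 0" by auto
      then show False using a by simp
    qed
    then show "d \<in> (\<lambda>d. d + 1) ` {d. H d \<noteq> 0}" by (intro image_eqI[of _ _ "d - 1"]) auto
  qed
  then have f2: "finite {d. dEnd H d \<noteq> 0}" using fin by (rule finite_subset[OF _ finite_imageI])
  have "typed d (dEnd H d)" for d
    unfolding typed_def
  proof
    fix m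
    show "if int m + d \<ge> 0 then dEnd H d m \<in> hom (Cobj m) (Cobj (nat (int m + d))) else dEnd H d m = 0"
    proof (cases "int m + d \<ge> 0")
      case True
      have A: "(if int m + d - 1 \<ge> 0 then mcomp (dP (nat (int m + d - 1))) (H (d - 1) m) else 0) \<in> hom (Cobj m) (Cobj (nat (int m + d)))"
      proof (cases "int m + d - 1 \<ge> 0")
        case True
        have h1: "H (d - 1) m \<in> hom (Cobj m) (Cobj (nat (int m + d - 1)))"
          using typedD1[OF ty[of "d - 1"], of m] True by (simp add: algebra_simps)
        have e: "Suc (nat (int m + d - 1)) = nat (int m + d)" using True by simp
        show ?thesis using True hom_mcomp[OF dP_hom[of "nat (int m + d - 1)", unfolded e] h1] by simp
      qed simp
      have h2: "H (d - 1) (Suc m) \<in> hom (Cobj (Suc m)) (Cobj (nat (int m + d)))"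
        using typedD1[OF ty[of "d - 1"], of "Suc m"] True by (simp add: algebra_simps)
      have B: "mcomp (H (d - 1) (Suc m)) (dP m) \<in> hom (Cobj m) (Cobj (nat (int m + d)))"
        by (rule hom_mcomp[OF h2 dP_hom])
      show ?thesis using True A B unfolding dEnd_Dsl Dsl_sg sg_def
        by (auto intro!: hom_diff hom_neg hom_add)
    next
      case False
      then show ?thesis by (simp add: dEnd_Dsl Dsl_sg)
    qed
  qed
  then show ?thesis using f2 by (simp add: EndP_iff)
qed


lemma EndP_typedD2: "F \<in> EndP \<Longrightarrow> int n + a < 0 \<Longrightarrow> F a n = 0"
  by (auto simp: EndP_iff intro: typedD2)
lemma EndP_typedD1: "F \<in> EndP \<Longrightarrow> int n + a \<ge> 0 \<Longrightarrow> F a n \<in> hom (Cobj n) (Cobj (nat (int n + a)))"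
  by (auto simp: EndP_iff intro: typedD1)

lemma ecomp_EndP:
  assumes FE: "F \<in> EndP" and GE: "G \<in> EndP"
  shows "ecomp F G \<in> EndP"
proof -
  have fF: "finite {d. F d \<noteq> 0}" and fG: "finite {d. G d \<noteq> 0}" using FE GE by (auto simp: EndP_iff)
  have sub: "{d. ecomp F G d \<noteq> 0} \<subseteq> (\<lambda>(a, b). a + b) ` ({d. F d \<noteq> 0} \<times> {d. G d \<noteq> 0})"
  proof
    fix d assume a: "d \<in> {d. ecomp F G d \<noteq> 0}"
    show "d \<in> (\<lambda>(a, b). a + b) ` ({d. F d \<noteq> 0} \<times> {d. G d \<noteq> 0})"
    proof (rule ccontr)
      assume na: "d \<notin> (\<lambda>(a, b). a + b) ` ({d. F d \<noteq> 0} \<times> {d. G d \<noteq> 0})"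
      have z: "F (d - e) = 0" if "e \<in> {d. G d \<noteq> 0}" for e
      proof (rule ccontr)
        assume "F (d - e) \<noteq> 0"
        then have "d \<in> (\<lambda>(a, b). a + b) ` ({d. F d \<noteq> 0} \<times> {d. G d \<noteq> 0})"
          using that by (intro image_eqI[of _ _ "(d - e, e)"]) auto
        then show False using na by simp
      qed
      have "ecomp F G d m = 0" for m unfolding ecomp_def using z by (intro sum.neutral) auto
      then have "ecomp F G d = 0" by auto
      then show False using a by simp
    qed
  qed
  have fin: "finite {d. ecomp F G d \<noteq> 0}"
    by (rule finite_subset[OF sub]) (intro finite_imageI finite_cartesian_product fF fG)
  have "typed d (ecomp F G d)" for d
    unfolding typed_def
  proof
    fix m
    show "if int m + d \<ge> 0 then ecomp F G d m \<in> hom (Cobj m) (Cobj (nat (int m + d))) else ecomp F G d m = 0"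
    proof (cases "int m + d \<ge> 0")
      case True
      have "(if int m + e \<ge> 0 then mcomp (F (d - e) (nat (int m + e))) (G e m) else 0) \<in> hom (Cobj m) (Cobj (nat (int m + d)))" for e
      proof (cases "int m + e \<ge> 0")
        case True
        have g: "G e m \<in> hom (Cobj m) (Cobj (nat (int m + e)))" by (rule EndP_typedD1[OF GE True])
        have e1: "int (nat (int m + e)) + (d - e) = int m + d" using True by simp
        have f: "F (d - e) (nat (int m + e)) \<in> hom (Cobj (nat (int m + e))) (Cobj (nat (int m + d)))"
          using EndP_typedD1[OF FE, of "nat (int m + e)" "d - e"] e1 \<open>int m + d \<ge> 0\<close> by simp
        show ?thesis using True hom_mcomp[OF f g] by simp
      qed simp
      then show ?thesis using True unfolding ecomp_def by (simp add: hom_sum)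
    next
      case False
      have "F (d - e) (nat (int m + e)) = 0" if "int m + e \<ge> 0" for e
        using EndP_typedD2[OF FE, of "nat (int m + e)" "d - e"] that False by simp
      then have "ecomp F G d m = 0" unfolding ecomp_def by (intro sum.neutral) auto
      then show ?thesis using False by simp
    qed
  qed
  then show ?thesis using fin by (simp add: EndP_iff)
qed

lemma L1_term:
  assumes GC: "G \<in> Cyc"
  shows "(if int m + e \<ge> 0 then mcomp (dEnd H (d - e) (nat (int m + e))) (G e m) else 0)
    = (if int m + e \<ge> 0 \<and> int m + d - 1 \<ge> 0 then mcomp (dP (nat (int m + d - 1))) (mcomp (H (d - 1 - e) (nat (int m + e))) (G e m)) else 0)
      - sg (d - 1) (if int m + d \<ge> 0 then (if int m + 1 + e \<ge> 0 then mcomp (H (d - 1 - e) (nat (int m + 1 + e))) (mcomp (G e (Suc m)) (dP m)) else 0) else 0)"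
proof (cases "int m + e \<ge> 0")
  case True
  define n where "n = nat (int m + e)"
  have n: "int n = int m + e" using True by (simp add: n_def)
  have cr: "mcomp (dP n) (G e m) = sg e (mcomp (G e (Suc m)) (dP m))"
    using cyc_rel[OF GC, of m e] True by (simp add: n_def)
  have e1: "d - e - 1 = d - 1 - e" by simp
  have e2: "Suc n = nat (int m + 1 + e)" using True by (simp add: n_def)
  have "mcomp (dEnd H (d - e) n) (G e m) =
     (if int m + d - 1 \<ge> 0 then mcomp (dP (nat (int m + d - 1))) (mcomp (H (d - 1 - e) n) (G e m)) else 0)
      - sg (d - e - 1) (if int m + d \<ge> 0 then mcomp (H (d - 1 - e) (Suc n)) (mcomp (dP n) (G e m)) else 0)"
    unfolding dEnd_Dsl Dsl_sg n e1 by (simp add: mcomp_diff1 sg_mcomp1 mcomp_assoc algebra_simps)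
  also have "\<dots> = (if int m + d - 1 \<ge> 0 then mcomp (dP (nat (int m + d - 1))) (mcomp (H (d - 1 - e) n) (G e m)) else 0)
      - sg (d - 1) (if int m + d \<ge> 0 then mcomp (H (d - 1 - e) (Suc n)) (mcomp (G e (Suc m)) (dP m)) else 0)"
    unfolding cr sg_mcomp2 by (simp add: sg_sg)
  finally show ?thesis using True e2 by (simp add: n_def)
next
  case False
  have T3: "(if int m + 1 + e \<ge> 0 then mcomp (H (d - 1 - e) (nat (int m + 1 + e))) (mcomp (G e (Suc m)) (dP m)) else 0) = 0"
  proof (cases "int m + 1 + e \<ge> 0")
    case True
    have "sg e (mcomp (G e (Suc m)) (dP m)) = 0" using cyc_rel[OF GC, of m e] True False by (simp add: add.commute add.left_commute)
    then have "mcomp (G e (Suc m)) (dP m) = 0" by (simp add: sg_def split: if_splits)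
    then show ?thesis by simp
  qed simp
  show ?thesis using False T3 by simp
qed


lemma L1:
  assumes HE: "H \<in> EndP" and GC: "G \<in> Cyc"
  shows "ecomp (dEnd H) G = dEnd (ecomp H G)"
proof (rule ext, rule ext)
  fix d m
  define S where "S = {e. G e \<noteq> 0}"
  define T1 where "T1 e = (if int m + e \<ge> 0 \<and> int m + d - 1 \<ge> 0 then mcomp (dP (nat (int m + d - 1))) (mcomp (H (d - 1 - e) (nat (int m + e))) (G e m)) else 0)" for e
  define T3 where "T3 e = (if int m + 1 + e \<ge> 0 then mcomp (H (d - 1 - e) (nat (int m + 1 + e))) (mcomp (G e (Suc m)) (dP m)) else 0)" for e
  have "ecomp (dEnd H) G d m = (\<Sum>e\<in>S. T1 e - sg (d - 1) (if int m + d \<ge> 0 then T3 e else 0))"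
    unfolding ecomp_def S_def T1_def T3_def by (intro sum.cong refl) (rule L1_term[OF GC])
  also have "\<dots> = (\<Sum>e\<in>S. T1 e) - sg (d - 1) (if int m + d \<ge> 0 then (\<Sum>e\<in>S. T3 e) else 0)"
    by (simp add: sum_subtractf sg_sum)
  also have "\<dots> = dEnd (ecomp H G) d m"
  proof -
    have A: "(\<Sum>e\<in>S. T1 e) = (if int m + d - 1 \<ge> 0 then mcomp (dP (nat (int m + d - 1))) (ecomp H G (d - 1) m) else 0)"
      unfolding ecomp_def S_def T1_def mcomp_sum2 by (auto intro: sum.cong)
    have B: "(\<Sum>e\<in>S. T3 e) = mcomp (ecomp H G (d - 1) (Suc m)) (dP m)"
      unfolding ecomp_def S_def T3_def mcomp_sum1 by (intro sum.cong refl) (simp add: mcomp_assoc add.commute add.left_commute)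
    show ?thesis unfolding dEnd_Dsl Dsl_sg A B by simp
  qed
  finally show "ecomp (dEnd H) G d m = dEnd (ecomp H G) d m" .
qed


definition tw :: "endo \<Rightarrow> endo" where
  "tw F = (\<lambda>d m. sg d (F d m))"

lemma tw_EndP: "F \<in> EndP \<Longrightarrow> tw F \<in> EndP"
proof -
  assume FE: "F \<in> EndP"
  have "{d. tw F d \<noteq> 0} \<subseteq> {d. F d \<noteq> 0}"
  proof
    fix d assume a: "d \<in> {d. tw F d \<noteq> 0}"
    have "F d = 0 \<Longrightarrow> tw F d = 0"
    proof -
      assume z: "F d = 0"
      show "tw F d = 0" unfolding tw_def z by (simp add: fun_eq_iff)
    qed
    then show "d \<in> {d. F d \<noteq> 0}" using a by auto
  qed
  then have "finite {d. tw F d \<noteq> 0}" using FE by (auto simp: EndP_iff intro: finite_subset)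
  moreover have "typed d (tw F d)" for d
  proof -
    have "typed d (F d)" using FE by (simp add: EndP_iff)
    then show ?thesis unfolding typed_def tw_def sg_def by (auto intro: hom_neg split: if_splits)
  qed
  ultimately show ?thesis by (simp add: EndP_iff)
qed

lemma sg_cong: "even a = even b \<Longrightarrow> sg a X = sg b X"
  by (simp add: sg_def)

lemma L2_term:
  assumes FC: "F \<in> Cyc"
  shows "(if int m + (e + 1) \<ge> 0 then mcomp (F (d - (e + 1)) (nat (int m + (e + 1)))) (dEnd H (e + 1) m) else 0)
    = (if int m + e \<ge> 0 \<and> int m + d - 1 \<ge> 0 then mcomp (dP (nat (int m + d - 1))) (mcomp (sg (d - 1 - e) (F (d - 1 - e) (nat (int m + e)))) (H e m)) else 0)
      - sg (d - 1) (if int m + d \<ge> 0 then (if int m + 1 + e \<ge> 0 then mcomp (mcomp (sg (d - 1 - e) (F (d - 1 - e) (nat (int m + 1 + e)))) (H e (Suc m))) (dP m) else 0) else 0)"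
proof -
  have FE: "F \<in> EndP" using FC by (simp add: Cyc_def)
  have e0: "d - (e + 1) = d - 1 - e" "e + 1 - 1 = e" "int m + (e + 1) = int m + 1 + e" "int m + (e + 1) - 1 = int m + e" by simp_all
  have DH: "dEnd H (e + 1) m = (if int m + e \<ge> 0 then mcomp (dP (nat (int m + e))) (H e m) else 0)
     - sg e (if int m + 1 + e \<ge> 0 then mcomp (H e (Suc m)) (dP m) else 0)"
    unfolding dEnd_Dsl Dsl_sg e0 by simp
  show ?thesis
  proof (cases "int m + 1 + e \<ge> 0")
    case False
    then show ?thesis unfolding e0 by simp
  next
    case True
    define F' where "F' = F (d - 1 - e) (nat (int m + 1 + e))"
    show ?thesis
    proof (cases "int m + d \<ge> 0")
      case False
      have "F' = 0" unfolding F'_def using EndP_typedD2[OF FE, of "nat (int m + 1 + e)" "d - 1 - e"] True False by simp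
      then show ?thesis unfolding e0 using True False by (simp add: F'_def)
    next
      case md: True
      have P1: "(if int m + e \<ge> 0 then mcomp F' (mcomp (dP (nat (int m + e))) (H e m)) else 0)
        = (if int m + e \<ge> 0 \<and> int m + d - 1 \<ge> 0 then mcomp (dP (nat (int m + d - 1))) (mcomp (sg (d - 1 - e) (F (d - 1 - e) (nat (int m + e)))) (H e m)) else 0)"
      proof (cases "int m + e \<ge> 0")
        case True
        define n where "n = nat (int m + e)"
        have n: "int n = int m + e" "Suc n = nat (int m + 1 + e)" using True by (simp_all add: n_def)
        have cr0: "(if int n + (d - 1 - e) \<ge> 0 then mcomp (dP (nat (int n + (d - 1 - e)))) (F (d - 1 - e) n) else 0)
          = sg (d - 1 - e) (if int n + (d - 1 - e) + 1 \<ge> 0 then mcomp (F (d - 1 - e) (Suc n)) (dP n) else 0)"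
          by (rule cyc_rel[OF FC])
        have e3: "int n + (d - 1 - e) = int m + d - 1" "int n + (d - 1 - e) + 1 = int m + d" using n by simp_all
        have cr1: "(if int m + d - 1 \<ge> 0 then mcomp (dP (nat (int m + d - 1))) (F (d - 1 - e) n) else 0) = sg (d - 1 - e) (mcomp F' (dP n))"
          using cr0 md by (simp only: e3 F'_def n(2) if_True diff_add_cancel)
        have cr: "mcomp F' (dP n) = sg (d - 1 - e) (if int m + d - 1 \<ge> 0 then mcomp (dP (nat (int m + d - 1))) (F (d - 1 - e) n) else 0)"
          using sg_eqI[OF cr1] by simp
        have "mcomp F' (mcomp (dP n) (H e m)) = mcomp (mcomp F' (dP n)) (H e m)" by (simp add: mcomp_assoc)
        also have "\<dots> = (if int m + d - 1 \<ge> 0 then mcomp (dP (nat (int m + d - 1))) (mcomp (sg (d - 1 - e) (F (d - 1 - e) n)) (H e m)) else 0)"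
          unfolding cr by (simp add: sg_mcomp1 sg_mcomp2 mcomp_assoc)
        finally show ?thesis using True by (simp add: n_def)
      qed simp
      have P2: "sg e (mcomp F' (mcomp (H e (Suc m)) (dP m))) = sg (d - 1) (mcomp (mcomp (sg (d - 1 - e) F') (H e (Suc m))) (dP m))"
      proof -
        have "sg (d - 1) (mcomp (mcomp (sg (d - 1 - e) F') (H e (Suc m))) (dP m)) = sg (d - 1 + (d - 1 - e)) (mcomp F' (mcomp (H e (Suc m)) (dP m)))"
          by (simp add: sg_mcomp1 sg_sg mcomp_assoc)
        also have "\<dots> = sg e (mcomp F' (mcomp (H e (Suc m)) (dP m)))" by (rule sg_cong) presburger
        finally show ?thesis by simp
      qed
      have "(if int m + (e + 1) \<ge> 0 then mcomp (F (d - (e + 1)) (nat (int m + (e + 1)))) (dEnd H (e + 1) m) else 0)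
        = (if int m + e \<ge> 0 then mcomp F' (mcomp (dP (nat (int m + e))) (H e m)) else 0) - sg e (mcomp F' (mcomp (H e (Suc m)) (dP m)))"
        unfolding DH e0 F'_def using True by (simp add: mcomp_diff2 sg_mcomp2)
      also have "\<dots> = (if int m + e \<ge> 0 \<and> int m + d - 1 \<ge> 0 then mcomp (dP (nat (int m + d - 1))) (mcomp (sg (d - 1 - e) (F (d - 1 - e) (nat (int m + e)))) (H e m)) else 0)
      - sg (d - 1) (if int m + d \<ge> 0 then (if int m + 1 + e \<ge> 0 then mcomp (mcomp (sg (d - 1 - e) (F (d - 1 - e) (nat (int m + 1 + e)))) (H e (Suc m))) (dP m) else 0) else 0)"
        unfolding P1 P2 using True md by (simp add: F'_def)
      finally show ?thesis .
    qed
  qed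
qed


lemma dEnd_supp: "{e. dEnd H e \<noteq> 0} \<subseteq> (\<lambda>e. e + 1) ` {e. H e \<noteq> 0}"
proof
  fix d assume a: "d \<in> {d. dEnd H d \<noteq> 0}"
  have "H (d - 1) \<noteq> 0"
  proof
    assume "H (d - 1) = 0"
    then have z: "H (d - 1) = (\<lambda>m. 0)" by auto
    have "dEnd H d m = 0" for m by (simp only: dEnd_Dsl z Dsl_zero)
    then have "dEnd H d = 0" by auto
    then show False using a by simp
  qed
  then show "d \<in> (\<lambda>d. d + 1) ` {d. H d \<noteq> 0}" by (intro image_eqI[of _ _ "d - 1"]) auto
qed

lemma L2:
  assumes FC: "F \<in> Cyc" and HE: "H \<in> EndP"
  shows "ecomp F (dEnd H) = dEnd (ecomp (tw F) H)"
proof (rule ext, rule ext)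
  fix d m
  define S where "S = {e. H e \<noteq> 0}"
  have fS: "finite S" using HE by (simp add: EndP_iff S_def)
  define U1 where "U1 e = (if int m + e \<ge> 0 \<and> int m + d - 1 \<ge> 0 then mcomp (dP (nat (int m + d - 1))) (mcomp (sg (d - 1 - e) (F (d - 1 - e) (nat (int m + e)))) (H e m)) else 0)" for e
  define U3 where "U3 e = (if int m + 1 + e \<ge> 0 then mcomp (mcomp (sg (d - 1 - e) (F (d - 1 - e) (nat (int m + 1 + e)))) (H e (Suc m))) (dP m) else 0)" for e
  have inj: "inj_on (\<lambda>e::int. e + 1) S" by (simp add: inj_on_def)
  have "ecomp F (dEnd H) d m = (\<Sum>e\<in>(\<lambda>e. e + 1) ` S. if int m + e \<ge> 0 then mcomp (F (d - e) (nat (int m + e))) (dEnd H e m) else 0)"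
    by (rule ecomp_sup) (use fS dEnd_supp[of H] in \<open>simp_all add: S_def\<close>)
  also have "\<dots> = (\<Sum>e\<in>S. if int m + (e + 1) \<ge> 0 then mcomp (F (d - (e + 1)) (nat (int m + (e + 1)))) (dEnd H (e + 1) m) else 0)"
    by (simp add: sum.reindex[OF inj])
  also have "\<dots> = (\<Sum>e\<in>S. U1 e - sg (d - 1) (if int m + d \<ge> 0 then U3 e else 0))"
    unfolding U1_def U3_def by (intro sum.cong refl) (rule L2_term[OF FC])
  also have "\<dots> = (\<Sum>e\<in>S. U1 e) - sg (d - 1) (if int m + d \<ge> 0 then (\<Sum>e\<in>S. U3 e) else 0)"
    by (simp add: sum_subtractf sg_sum)
  also have "\<dots> = dEnd (ecomp (tw F) H) d m"
  proof -
    have A: "(\<Sum>e\<in>S. U1 e) = (if int m + d - 1 \<ge> 0 then mcomp (dP (nat (int m + d - 1))) (ecomp (tw F) H (d - 1) m) else 0)"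
      unfolding ecomp_def S_def U1_def mcomp_sum2 tw_def by (auto intro: sum.cong)
    have B: "(\<Sum>e\<in>S. U3 e) = mcomp (ecomp (tw F) H (d - 1) (Suc m)) (dP m)"
      unfolding ecomp_def S_def U3_def mcomp_sum1 tw_def by (intro sum.cong refl) (simp add: add.commute add.left_commute)
    show ?thesis unfolding dEnd_Dsl Dsl_sg A B by simp
  qed
  finally show "ecomp F (dEnd H) d m = dEnd (ecomp (tw F) H) d m" .
qed


lemma ecomp_add2:
  assumes "finite {e. G e \<noteq> 0}" "finite {e. G' e \<noteq> 0}"
  shows "ecomp F (G + G') = ecomp F G + ecomp F G'"
proof (rule ext, rule ext)
  fix d m
  define S where "S = {e. G e \<noteq> 0} \<union> {e. G' e \<noteq> 0}"
  have fS: "finite S" using assms by (simp add: S_def)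
  have s1: "{e. (G + G') e \<noteq> 0} \<subseteq> S" "{e. G e \<noteq> 0} \<subseteq> S" "{e. G' e \<noteq> 0} \<subseteq> S" by (auto simp: S_def)
  show "ecomp F (G + G') d m = (ecomp F G + ecomp F G') d m"
    unfolding plus_endo ecomp_sup[OF fS s1(1)] ecomp_sup[OF fS s1(2)] ecomp_sup[OF fS s1(3)] sum.distrib[symmetric]
    by (intro sum.cong refl) (simp add: mcomp_add2)
qed

lemma ecomp_smul2:
  assumes "finite {e. G e \<noteq> 0}"
  shows "ecomp F (smul c G) = smul c (ecomp F G)"
proof (rule ext, rule ext)
  fix d m
  define S where "S = {e. G e \<noteq> 0}"
  have fS: "finite S" using assms by (simp add: S_def)
  have s1: "{e. smul c G e \<noteq> 0} \<subseteq> S"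
  proof
    fix e assume a: "e \<in> {e. smul c G e \<noteq> 0}"
    have "G e = 0 \<Longrightarrow> smul c G e = 0" by (auto simp: smul_def fun_eq_iff)
    then show "e \<in> S" using a by (auto simp: S_def)
  qed
  have s2: "{e. G e \<noteq> 0} \<subseteq> S" by (simp add: S_def)
  show "ecomp F (smul c G) d m = smul c (ecomp F G) d m"
  proof (rule ext)
    fix x
    have "ecomp F (smul c G) d m x = (\<Sum>e\<in>S. if 0 \<le> int m + e then mcomp (F (d - e) (nat (int m + e))) (\<lambda>x. c * G e m x) else 0) x"
      unfolding ecomp_sup[OF fS s1] unfolding smul_def by (rule refl)
    also have "\<dots> = c * (\<Sum>e\<in>S. if 0 \<le> int m + e then mcomp (F (d - e) (nat (int m + e))) (G e m) else 0) x"
      unfolding sum_apply_fun sum_distrib_left by (intro sum.cong refl) (simp add: mcomp_scal2)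
    also have "\<dots> = smul c (ecomp F G) d m x" unfolding smul_def unfolding ecomp_sup[OF fS s2] by (rule refl)
    finally show "ecomp F (smul c G) d m x = smul c (ecomp F G) d m x" .
  qed
qed

lemma ecomp_zero2[simp]: "ecomp F 0 = 0"
proof (rule ext, rule ext)
  fix d m show "ecomp F 0 d m = 0 d m" unfolding ecomp_def by simp
qed

definition gl :: "(int \<times> nat \<times> bool) list \<Rightarrow> endo" where
  "gl xs = foldr (\<lambda>x acc. smul (fst x) (FamE (fst (snd x)) (snd (snd x))) + acc) xs 0"

lemma gl_Nil[simp]: "gl [] = 0" by (simp add: gl_def)
lemma gl_Cons[simp]: "gl (x # xs) = smul (fst x) (FamE (fst (snd x)) (snd (snd x))) + gl xs" by (simp add: gl_def)

definition FS :: "endo set" where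
  "FS = range gl"

lemma gl_EndP: "gl xs \<in> EndP"
proof (induct xs)
  case Nil show ?case unfolding gl_Nil by (rule EndP_zero)
next
  case (Cons x xs) show ?case unfolding gl_Cons by (intro EndP_add EndP_smul FamE_EndP Cons)
qed

lemma FS_fin: "X \<in> FS \<Longrightarrow> finite {e. X e \<noteq> 0}"
  using gl_EndP by (auto simp: EndP_iff FS_def)

lemma gl_append: "gl (xs @ ys) = gl xs + gl ys"
proof (induct xs)
  case Nil show ?case by (simp only: gl_Nil append_Nil add.left_neutral)
next
  case (Cons x xs) then show ?case by (simp add: add.assoc)
qed

lemma FS_add: "X \<in> FS \<Longrightarrow> Y \<in> FS \<Longrightarrow> X + Y \<in> FS"
proof -
  assume "X \<in> FS" "Y \<in> FS"
  then obtain xs ys where "X = gl xs" "Y = gl ys" unfolding FS_def by auto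
  then have "X + Y = gl (xs @ ys)" by (simp add: gl_append)
  then show ?thesis unfolding FS_def by auto
qed

lemma FS_zero: "0 \<in> FS"
  unfolding FS_def by (metis gl_Nil rangeI)

lemma FS_sum: "(\<And>i. i \<in> I \<Longrightarrow> X i \<in> FS) \<Longrightarrow> (\<Sum>i\<in>I. X i) \<in> FS"
proof (induct I rule: infinite_finite_induct)
  case (insert x I)
  then show ?case by (simp only: sum.insert[OF insert(1,2)]) (intro FS_add; auto)
next
  case (infinite A) then show ?case by (simp only: sum.infinite[OF infinite(1)] FS_zero)
next
  case empty then show ?case by (simp only: sum.empty FS_zero)
qed

lemma FS_gen: "smul c (FamE \<delta> t) \<in> FS"
proof -
  have "gl [(c, \<delta>, t)] = smul c (FamE \<delta> t)" by simp
  then show ?thesis unfolding FS_def by (metis rangeI)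
qed

lemma Phi_FS: "Phi p q r \<in> FS"
  unfolding Phi_sum by (intro FS_add FS_sum FS_gen)

lemma FamE_comm: "ecomp (FamE \<delta>1 t1) (FamE \<delta>2 t2) = ecomp (FamE \<delta>2 t2) (FamE \<delta>1 t1)"
  by (simp add: FamE_comp add.commute conj_commute disj_commute)

lemma FamE_fin: "finite {e. FamE \<delta> t e \<noteq> 0}"
  using FamE_EndP by (simp add: EndP_iff)

lemma smul_fin: "finite {e. G e \<noteq> 0} \<Longrightarrow> finite {e. smul c G e \<noteq> 0}"
proof -
  assume a: "finite {e. G e \<noteq> 0}"
  have "{e. smul c G e \<noteq> 0} \<subseteq> {e. G e \<noteq> 0}"
  proof
    fix e assume b: "e \<in> {e. smul c G e \<noteq> 0}"
    have "G e = 0 \<Longrightarrow> smul c G e = 0" by (auto simp: smul_def fun_eq_iff)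
    then show "e \<in> {e. G e \<noteq> 0}" using b by auto
  qed
  then show ?thesis using a by (rule finite_subset)
qed

lemma gl_fin: "finite {e. gl xs e \<noteq> 0}"
  using gl_EndP by (simp add: EndP_iff)

lemma comm1: "ecomp (FamE \<delta> t) (gl ys) = ecomp (gl ys) (FamE \<delta> t)"
proof (induct ys)
  case Nil then show ?case by (simp only: gl_Nil ecomp_zero1 ecomp_zero2)
next
  case (Cons y ys)
  obtain c \<delta>' t' where y: "y = (c, \<delta>', t')" by (cases y) auto
  have "ecomp (FamE \<delta> t) (gl (y # ys)) = smul c (ecomp (FamE \<delta> t) (FamE \<delta>' t')) + ecomp (FamE \<delta> t) (gl ys)"
    by (simp add: y ecomp_add2 smul_fin FamE_fin gl_fin ecomp_smul2)
  also have "\<dots> = smul c (ecomp (FamE \<delta>' t') (FamE \<delta> t)) + ecomp (gl ys) (FamE \<delta> t)"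
    using Cons FamE_comm by simp
  also have "\<dots> = ecomp (gl (y # ys)) (FamE \<delta> t)"
    by (simp add: y ecomp_add1 ecomp_smul1)
  finally show ?case .
qed

lemma gl_comm: "ecomp (gl xs) (gl ys) = ecomp (gl ys) (gl xs)"
proof (induct xs)
  case Nil then show ?case by (simp only: gl_Nil ecomp_zero1 ecomp_zero2)
next
  case (Cons x xs)
  obtain c \<delta> t where x: "x = (c, \<delta>, t)" by (cases x) auto
  have "ecomp (gl (x # xs)) (gl ys) = smul c (ecomp (FamE \<delta> t) (gl ys)) + ecomp (gl xs) (gl ys)"
    by (simp add: x ecomp_add1 ecomp_smul1)
  also have "\<dots> = smul c (ecomp (gl ys) (FamE \<delta> t)) + ecomp (gl ys) (gl xs)"
    using Cons comm1 by simp
  also have "\<dots> = ecomp (gl ys) (gl (x # xs))"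
    by (simp add: x ecomp_add2 smul_fin FamE_fin gl_fin ecomp_smul2)
  finally show ?case .
qed

lemma FS_comm: "X \<in> FS \<Longrightarrow> Y \<in> FS \<Longrightarrow> ecomp X Y = ecomp Y X"
  unfolding FS_def using gl_comm by blast

theorem part_D:
  assumes FC: "F \<in> Cyc" and GC: "G \<in> Cyc"
  shows "ecomp F G - ecomp G F \<in> Bd"
proof -
  obtain p q r where "F - Phi p q r \<in> Bd" using part_B[OF FC] by blast
  then obtain H1 where H1: "H1 \<in> EndP" "F - Phi p q r = dEnd H1" by (auto simp: Bd_def)
  obtain p' q' r' where "G - Phi p' q' r' \<in> Bd" using part_B[OF GC] by blast
  then obtain H2 where H2: "H2 \<in> EndP" "G - Phi p' q' r' = dEnd H2" by (auto simp: Bd_def)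
  define A where "A = Phi p q r"
  define B where "B = Phi p' q' r'"
  have AC: "A \<in> Cyc" and BC: "B \<in> Cyc" by (simp_all add: A_def B_def Phi_Cyc)
  have AE: "A \<in> EndP" and BE: "B \<in> EndP" using AC BC by (simp_all add: Cyc_def)
  have FE: "F \<in> EndP" and GE: "G \<in> EndP" using FC GC by (simp_all add: Cyc_def)
  have F: "F = A + dEnd H1" using H1(2) by (simp add: A_def algebra_simps)
  have G: "G = B + dEnd H2" using H2(2) by (simp add: B_def algebra_simps)
  have fin: "\<And>X. X \<in> EndP \<Longrightarrow> finite {e. X e \<noteq> 0}" by (simp add: EndP_iff)
  have AB: "ecomp A B = ecomp B A" unfolding A_def B_def by (rule FS_comm[OF Phi_FS Phi_FS])
  have FG: "ecomp F G = ecomp A B + dEnd (ecomp (tw A) H2) + dEnd (ecomp H1 G)"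
  proof -
    have "ecomp F G = ecomp A G + ecomp (dEnd H1) G" unfolding F by (rule ecomp_add1)
    also have "ecomp (dEnd H1) G = dEnd (ecomp H1 G)" by (rule L1[OF H1(1) GC])
    also have "ecomp A G = ecomp A B + ecomp A (dEnd H2)"
      unfolding G by (rule ecomp_add2[OF fin[OF BE] fin[OF dEnd_EndP[OF H2(1)]]])
    also have "ecomp A (dEnd H2) = dEnd (ecomp (tw A) H2)" by (rule L2[OF AC H2(1)])
    finally show ?thesis .
  qed
  have GF: "ecomp G F = ecomp B A + dEnd (ecomp (tw B) H1) + dEnd (ecomp H2 F)"
  proof -
    have "ecomp G F = ecomp B F + ecomp (dEnd H2) F" unfolding G by (rule ecomp_add1)
    also have "ecomp (dEnd H2) F = dEnd (ecomp H2 F)" by (rule L1[OF H2(1) FC])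
    also have "ecomp B F = ecomp B A + ecomp B (dEnd H1)"
      unfolding F by (rule ecomp_add2[OF fin[OF AE] fin[OF dEnd_EndP[OF H1(1)]]])
    also have "ecomp B (dEnd H1) = dEnd (ecomp (tw B) H1)" by (rule L2[OF BC H1(1)])
    finally show ?thesis .
  qed
  define X where "X = ecomp (tw A) H2 + ecomp H1 G - ecomp (tw B) H1 - ecomp H2 F"
  have XE: "X \<in> EndP" unfolding X_def
    by (intro EndP_add EndP_diff ecomp_EndP tw_EndP AE BE FE GE H1(1) H2(1))
  have "ecomp F G - ecomp G F = dEnd X"
    unfolding FG GF X_def AB by (simp add: dEnd_add dEnd_diff algebra_simps)
  then show ?thesis using XE unfolding Bd_def by blast
qed

lemma zero_Bd: "0 \<in> Bd"
  unfolding Bd_def using EndP_zero dEnd_zero by (metis image_eqI)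

lemma FamE_Cyc: "even \<delta> \<or> (t \<and> \<delta> \<ge> 3) \<Longrightarrow> FamE \<delta> t \<in> Cyc"
  by (simp add: Cyc_def FamE_EndP dEnd_FamE)

theorem mainTheorem8:
  shows "(bP \<in> Cyc \<and> uP \<in> Cyc \<and> wP \<in> Cyc \<and> IdP \<in> Cyc)
    \<and> (\<forall>F\<in>Cyc. \<exists>p q r. F - Phi p q r \<in> Bd)
    \<and> (\<forall>p q r. Phi p q r \<in> Bd \<longleftrightarrow> (p = 0 \<and> q = 0 \<and> [:0, 2:] dvd r))
    \<and> (\<forall>F\<in>Cyc. \<forall>G\<in>Cyc. ecomp F G - ecomp G F \<in> Bd)
    \<and> (ecomp wP bP \<in> Bd \<and> ecomp bP bP \<in> Bd \<and> ecomp wP wP \<in> Bd)"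
proof (intro conjI ballI allI)
  show "bP \<in> Cyc" unfolding bP_FamE by (rule FamE_Cyc) simp
  show "uP \<in> Cyc" unfolding uP_FamE by (rule FamE_Cyc) simp
  show "wP \<in> Cyc" unfolding wP_FamE by (rule FamE_Cyc) simp
  show "IdP \<in> Cyc" unfolding IdP_FamE by (rule FamE_Cyc) simp
  show "\<exists>p q r. F - Phi p q r \<in> Bd" if "F \<in> Cyc" for F using part_B[OF that] .
  show "Phi p q r \<in> Bd \<longleftrightarrow> (p = 0 \<and> q = 0 \<and> [:0, 2:] dvd r)" for p q r by (rule part_C)
  show "ecomp F G - ecomp G F \<in> Bd" if "F \<in> Cyc" "G \<in> Cyc" for F G using part_D[OF that] .
  show "ecomp wP bP \<in> Bd" unfolding wP_FamE bP_FamE FamE_comp by (simp add: zero_Bd)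
  show "ecomp bP bP \<in> Bd" unfolding bP_FamE FamE_comp by (simp add: zero_Bd)
  show "ecomp wP wP \<in> Bd" unfolding wP_FamE FamE_comp by (simp add: zero_Bd)
qed

end
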